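(* Let $K$ be a compact subset of $I\setminus\{(c,\gamma): c_1=-1\text{ or }\gamma=\gamma^+(c)\}$. Then for any $\epsilon>0$ there exist positive constants $\delta$ and $C$, depending only on $\epsilon$ and $K$, such that for all $(c,\gamma)\in K$, $$|U^{c,\gamma}_\theta(x)-U^{c,\gamma}_\theta(-1)|\le C(1+x)^{\min\{\sqrt{1+c_1},1\}-\epsilon},\quad -1<x<-1+\delta.$$
   Context: For $c=(c_1,c_2,c_3)$ let $P_c(x):=c_1(1-x)+c_2(1+x)+c_3(1-x^2)$ and consider $(1-x^2)U'+2xU+\frac12U^2=P_c(x)$ on $(-1,1)$. For $c_1,c_2\ge-1$ let $\bar c_3(c_1,c_2):=-\frac12(\sqrt{1+c_1}+\sqrt{1+c_2})(\sqrt{1+c_1}+\sqrt{1+c_2}+2)$, $J:=\{c:c_1\ge-1,c_2\ge-1,c_3\ge\bar c_3\}$. For $c\in J$ there are solutions $U^\pm_\theta(c)$ on $(-1,1)$ with $U^-_\theta(c)\le U\le U^+_\theta(c)$ for every solution $U$; $\gamma^\pm(c):=U^\pm_\theta(c)(0)$; $I:=\{(c,\gamma):c\in J,\gamma^-(c)\le\gamma\le\gamma^+(c)\}$; for $(c,\gamma)\in I$, $U^{c,\gamma}_\theta$ is the unique solution on $(-1,1)$ with $U^{c,\gamma}_\theta(0)=\gamma$, which extends continuously to $[-1,1]$; $U^{c,\gamma}_\theta(-1)$ is its limit at $-1$. *)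

theory Defs
  imports "HOL-Analysis.Analysis"
begin

type_synonym param = "real \<times> real \<times> real"

definition cc1 :: "param \<Rightarrow> real" where "cc1 c = fst c"
definition cc2 :: "param \<Rightarrow> real" where "cc2 c = fst (snd c)"
definition cc3 :: "param \<Rightarrow> real" where "cc3 c = snd (snd c)"

definition Pc :: "param \<Rightarrow> real \<Rightarrow> real" where
  "Pc c x = cc1 c * (1 - x) + cc2 c * (1 + x) + cc3 c * (1 - x\<^sup>2)"

definition is_sol :: "param \<Rightarrow> (real \<Rightarrow> real) \<Rightarrow> bool" where
  "is_sol c U \<longleftrightarrow> (\<forall>x. -1 < x \<and> x < 1 \<longrightarrow>
      U differentiable (at x) \<and>
      (1 - x\<^sup>2) * deriv U x + 2 * x * U x + (1/2) * (U x)\<^sup>2 = Pc c x)"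

definition c3bar :: "real \<Rightarrow> real \<Rightarrow> real" where
  "c3bar a b = - (1/2) * (sqrt (1 + a) + sqrt (1 + b)) * (sqrt (1 + a) + sqrt (1 + b) + 2)"

definition Jset :: "param set" where
  "Jset = {c. cc1 c \<ge> -1 \<and> cc2 c \<ge> -1 \<and> cc3 c \<ge> c3bar (cc1 c) (cc2 c)}"

definition gamma_plus :: "param \<Rightarrow> real" where
  "gamma_plus c = (THE g. \<exists>U. is_sol c U \<and>
      (\<forall>V. is_sol c V \<longrightarrow> (\<forall>x. -1 < x \<and> x < 1 \<longrightarrow> V x \<le> U x)) \<and> U 0 = g)"

definition gamma_minus :: "param \<Rightarrow> real" where
  "gamma_minus c = (THE g. \<exists>U. is_sol c U \<and>
      (\<forall>V. is_sol c V \<longrightarrow> (\<forall>x. -1 < x \<and> x < 1 \<longrightarrow> U x \<le> V x)) \<and> U 0 = g)"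

definition Iset :: "(param \<times> real) set" where
  "Iset = {(c, g). c \<in> Jset \<and> gamma_minus c \<le> g \<and> g \<le> gamma_plus c}"

end

theory Submission
  imports Defs
begin


lemma barrier_left:
  fixes f f' :: "real \<Rightarrow> real"
  assumes ab: "a \<le> b" and der: "\<And>t. a \<le> t \<Longrightarrow> t \<le> b \<Longrightarrow> (f has_real_derivative f' t) (at t)"
    and fb: "f b \<ge> 0" and zero: "\<And>t. a \<le> t \<Longrightarrow> t \<le> b \<Longrightarrow> f t = 0 \<Longrightarrow> f' t < 0"
  shows "f a \<ge> 0"
proof (rule ccontr)
  assume neg: "\<not> f a \<ge> 0"
  have cont: "continuous_on {a..b} f"
    using der by (meson DERIV_isCont atLeastAtMost_iff continuous_at_imp_continuous_on)
  define Z where "Z = {a..b} \<inter> f -` {0}"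
  have clZ: "closed Z" unfolding Z_def by (rule continuous_closed_preimage[OF cont]) auto
  obtain z where z: "a \<le> z" "z \<le> b" "f z = 0" using IVT'[of f a 0 b] neg fb ab cont by auto
  hence Zne: "Z \<noteq> {}" unfolding Z_def by auto
  have bdd: "bdd_below Z" unfolding Z_def by (rule bdd_belowI[of _ a]) auto
  define t2 where "t2 = Inf Z"
  have t2Z: "t2 \<in> Z" unfolding t2_def by (rule closed_contains_Inf[OF Zne bdd clZ])
  hence t2: "a \<le> t2" "t2 \<le> b" "f t2 = 0" unfolding Z_def by auto
  have at2: "a < t2" using t2 neg by (cases "a = t2") auto
  obtain d where d: "d > 0" "\<forall>h>0. h < d \<longrightarrow> f t2 < f (t2 - h)"
    using DERIV_neg_dec_left[OF der[OF t2(1,2)] zero[OF t2]] by blast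
  define h where "h = min (d/2) ((t2 - a)/2)"
  have h: "h > 0" "h < d" "t2 - h > a" using d at2 unfolding h_def by (auto simp: min_def field_simps)
  have "f (t2 - h) > 0" using d h t2 by auto
  moreover have "continuous_on {a..t2-h} f" using cont by (rule continuous_on_subset) (use t2 h in auto)
  ultimately obtain t4 where t4: "a \<le> t4" "t4 \<le> t2 - h" "f t4 = 0"
    using IVT'[of f a 0 "t2 - h"] neg h by auto
  hence "t4 \<in> Z" using t2 h unfolding Z_def by auto
  hence "t2 \<le> t4" unfolding t2_def using bdd by (rule cInf_lower)
  thus False using t4 h by auto
qed

lemma barrier_right:
  fixes f f' :: "real \<Rightarrow> real"
  assumes ab: "a \<le> b" and der: "\<And>t. a \<le> t \<Longrightarrow> t \<le> b \<Longrightarrow> (f has_real_derivative f' t) (at t)"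
    and fa: "f a \<ge> 0" and zero: "\<And>t. a \<le> t \<Longrightarrow> t \<le> b \<Longrightarrow> f t = 0 \<Longrightarrow> f' t > 0"
  shows "f b \<ge> 0"
proof (rule ccontr)
  assume neg: "\<not> f b \<ge> 0"
  have cont: "continuous_on {a..b} f"
    using der by (meson DERIV_isCont atLeastAtMost_iff continuous_at_imp_continuous_on)
  define Z where "Z = {a..b} \<inter> f -` {0}"
  have clZ: "closed Z" unfolding Z_def by (rule continuous_closed_preimage[OF cont]) auto
  obtain z where z: "a \<le> z" "z \<le> b" "f z = 0" using IVT2'[of f b 0 a] neg fa ab cont by auto
  hence Zne: "Z \<noteq> {}" unfolding Z_def by auto
  have bdd: "bdd_above Z" unfolding Z_def by (rule bdd_aboveI[of _ b]) auto
  define t2 where "t2 = Sup Z"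
  have t2Z: "t2 \<in> Z" unfolding t2_def by (rule closed_contains_Sup[OF Zne bdd clZ])
  hence t2: "a \<le> t2" "t2 \<le> b" "f t2 = 0" unfolding Z_def by auto
  have at2: "t2 < b" using t2 neg by (cases "b = t2") auto
  obtain d where d: "d > 0" "\<forall>h>0. h < d \<longrightarrow> f t2 < f (t2 + h)"
    using DERIV_pos_inc_right[OF der[OF t2(1,2)] zero[OF t2]] by blast
  define h where "h = min (d/2) ((b - t2)/2)"
  have h: "h > 0" "h < d" "t2 + h < b" using d at2 unfolding h_def by (auto simp: min_def field_simps)
  have "f (t2 + h) > 0" using d h t2 by auto
  moreover have "continuous_on {t2+h..b} f" using cont by (rule continuous_on_subset) (use t2 h in auto)
  ultimately obtain t4 where t4: "t2 + h \<le> t4" "t4 \<le> b" "f t4 = 0"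
    using IVT2'[of f b 0 "t2 + h"] neg h by auto
  hence "t4 \<in> Z" using t2 h unfolding Z_def by auto
  hence "t4 \<le> t2" unfolding t2_def using bdd by (rule cSup_upper)
  thus False using t4 h by auto
qed



lemma gron1:
  fixes D D' :: "real \<Rightarrow> real"
  assumes lo: "lo \<le> x0" "x0 \<le> hi"
    and der: "\<And>t. lo \<le> t \<Longrightarrow> t \<le> hi \<Longrightarrow> (D has_real_derivative D' t) (at t)"
    and bnd: "\<And>t. lo \<le> t \<Longrightarrow> t \<le> hi \<Longrightarrow> \<bar>D' t\<bar> \<le> L * \<bar>D t\<bar> + Q"
    and L: "L \<ge> 0" and Q: "Q \<ge> 0" and K: "K > Q" and D0: "D x0 \<le> K - Q"
    and t: "lo \<le> t" "t \<le> hi"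
  shows "D t \<le> K * exp ((L+1) * \<bar>t - x0\<bar>) - Q"
proof (cases "t \<le> x0")
  case True
  define f where "f u = K * exp ((L+1) * (x0 - u)) - Q - D u" for u
  have "f t \<ge> 0"
  proof (rule barrier_left[of t x0 f "\<lambda>u. K * exp ((L+1) * (x0 - u)) * (-(L+1)) - D' u"])
    show "t \<le> x0" by fact
    fix u assume u: "t \<le> u" "u \<le> x0"
    show "(f has_real_derivative K * exp ((L+1) * (x0 - u)) * (-(L+1)) - D' u) (at u)"
      unfolding f_def using der[of u] u t lo
      by (auto intro!: derivative_eq_intros)
    assume fz: "f u = 0"
    have e1: "exp ((L+1) * (x0 - u)) \<ge> 1" using u L by auto
    have Dv: "D u = K * exp ((L+1) * (x0 - u)) - Q" using fz unfolding f_def by simp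
    have Ke: "K * exp ((L+1) * (x0 - u)) \<ge> K" using e1 K Q by (simp add: mult_le_cancel_left1)
    have Dpos: "D u > 0" using Dv K Ke Q by linarith
    have "\<bar>D' u\<bar> \<le> L * D u + Q" using bnd[of u] u t lo Dpos by auto
    hence "- D' u \<le> L * D u + Q" by linarith
    moreover have "K * exp ((L+1) * (x0 - u)) * (-(L+1)) = - (L * (K * exp ((L+1) * (x0 - u)))) - K * exp ((L+1) * (x0 - u))"
      by (simp add: algebra_simps)
    moreover have "L * D u = L * (K * exp ((L+1) * (x0 - u))) - L * Q" by (subst Dv) (simp add: right_diff_distrib)
    moreover have "L * Q \<ge> 0" using L Q by simp
    ultimately show "K * exp ((L+1) * (x0 - u)) * (-(L+1)) - D' u < 0"
      using Ke K by linarith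
  next
    show "f x0 \<ge> 0" unfolding f_def using D0 by simp
  qed
  thus ?thesis using True unfolding f_def by simp
next
  case False
  define f where "f u = K * exp ((L+1) * (u - x0)) - Q - D u" for u
  have "f t \<ge> 0"
  proof (rule barrier_right[of x0 t f "\<lambda>u. K * exp ((L+1) * (u - x0)) * (L+1) - D' u"])
    show "x0 \<le> t" using False by simp
    fix u assume u: "x0 \<le> u" "u \<le> t"
    show "(f has_real_derivative K * exp ((L+1) * (u - x0)) * (L+1) - D' u) (at u)"
      unfolding f_def using der[of u] u t lo
      by (auto intro!: derivative_eq_intros)
    assume fz: "f u = 0"
    have e1: "exp ((L+1) * (u - x0)) \<ge> 1" using u L by auto
    have Dv: "D u = K * exp ((L+1) * (u - x0)) - Q" using fz unfolding f_def by simp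
    have Ke: "K * exp ((L+1) * (u - x0)) \<ge> K" using e1 K Q by (simp add: mult_le_cancel_left1)
    have Dpos: "D u > 0" using Dv K Ke Q by linarith
    have "\<bar>D' u\<bar> \<le> L * D u + Q" using bnd[of u] u t lo Dpos by auto
    hence "D' u \<le> L * D u + Q" by linarith
    moreover have "K * exp ((L+1) * (u - x0)) * (L+1) = (L * (K * exp ((L+1) * (u - x0)))) + K * exp ((L+1) * (u - x0))"
      by (simp add: algebra_simps)
    moreover have "L * D u = L * (K * exp ((L+1) * (u - x0))) - L * Q" by (subst Dv) (simp add: right_diff_distrib)
    moreover have "L * Q \<ge> 0" using L Q by simp
    ultimately show "K * exp ((L+1) * (u - x0)) * (L+1) - D' u > 0"
      using Ke K by linarith
  next
    show "f x0 \<ge> 0" unfolding f_def using D0 by simp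
  qed
  thus ?thesis using False unfolding f_def by simp
qed

lemma gronwall:
  fixes D D' :: "real \<Rightarrow> real"
  assumes lo: "lo \<le> x0" "x0 \<le> hi"
    and der: "\<And>t. lo \<le> t \<Longrightarrow> t \<le> hi \<Longrightarrow> (D has_real_derivative D' t) (at t)"
    and bnd: "\<And>t. lo \<le> t \<Longrightarrow> t \<le> hi \<Longrightarrow> \<bar>D' t\<bar> \<le> L * \<bar>D t\<bar> + Q"
    and L: "L \<ge> 0" and Q: "Q \<ge> 0"
    and t: "lo \<le> t" "t \<le> hi"
  shows "\<bar>D t\<bar> \<le> (\<bar>D x0\<bar> + Q) * exp ((L+1) * \<bar>t - x0\<bar>)"
proof -
  define E where "E = exp ((L+1) * \<bar>t - x0\<bar>)"
  have E: "E > 0" unfolding E_def by simp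
  show ?thesis
  proof (rule field_le_epsilon)
    fix e :: real assume e: "e > 0"
    define K where "K = \<bar>D x0\<bar> + e / E + Q"
    have eE: "e / E > 0" using e E by simp
    have K: "K > Q" unfolding K_def using eE abs_ge_zero[of "D x0"] by linarith
    have a: "D t \<le> K * E - Q"
      unfolding E_def by (rule gron1[OF lo der bnd L Q K _ t]) (use eE abs_ge_self[of "D x0"] in \<open>auto simp: K_def\<close>)
    have b: "- D t \<le> K * E - Q"
      unfolding E_def
      by (rule gron1[OF lo _ _ L Q K _ t, of "\<lambda>u. - D u" "\<lambda>u. - D' u"])
         (use eE abs_ge_minus_self[of "D x0"] in \<open>auto simp: K_def intro!: derivative_eq_intros der bnd\<close>)
    have "K * E = (\<bar>D x0\<bar> + Q) * E + e" unfolding K_def using E by (simp add: field_simps)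
    thus "\<bar>D t\<bar> \<le> (\<bar>D x0\<bar> + Q) * exp ((L+1) * \<bar>t - x0\<bar>) + e"
      using a b Q unfolding E_def by linarith
  qed
qed



definition G :: "param \<Rightarrow> real \<Rightarrow> real \<Rightarrow> real" where
  "G c x u = Pc c x - 2 * x * u - u\<^sup>2 / 2"

definition Pm :: "param \<Rightarrow> real" where
  "Pm c = 2 * \<bar>cc1 c\<bar> + 2 * \<bar>cc2 c\<bar> + \<bar>cc3 c\<bar>"

definition Rb :: "param \<Rightarrow> real" where
  "Rb c = 9 + Pm c"

lemma der_ln_p: "0 < 1 + t \<Longrightarrow> ((\<lambda>t. ln (1 + t)) has_real_derivative 1 / (1 + t)) (at t)"
  by (auto intro!: derivative_eq_intros)

lemma der_ln_m: "0 < 1 - t \<Longrightarrow> ((\<lambda>t. ln (1 - t)) has_real_derivative - 1 / (1 - t)) (at t)"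
  by (auto intro!: derivative_eq_intros)

lemma der_recip: "(U has_real_derivative u') (at t) \<Longrightarrow> U t \<noteq> 0 \<Longrightarrow>
   ((\<lambda>t. 1 / U t) has_real_derivative - u' / (U t)\<^sup>2) (at t)"
  by (rule DERIV_cong[OF DERIV_divide[OF DERIV_const]]) (simp_all add: power2_eq_square)

lemma sol_der:
  assumes "is_sol c U" "-1 < x" "x < 1"
  shows "(U has_real_derivative G c x (U x) / (1 - x\<^sup>2)) (at x)"
proof -
  have d: "U differentiable (at x)" and e: "(1 - x\<^sup>2) * deriv U x + 2 * x * U x + (1/2) * (U x)\<^sup>2 = Pc c x"
    using assms unfolding is_sol_def by auto
  have pos: "1 - x\<^sup>2 > 0" using assms by (simp add: abs_square_less_1)
  have "deriv U x = G c x (U x) / (1 - x\<^sup>2)"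
    using e pos unfolding G_def by (simp add: field_simps)
  thus ?thesis using d by (metis DERIV_deriv_iff_real_differentiable)
qed

lemma Pc_bound:
  assumes "-1 < x" "x < 1"
  shows "\<bar>Pc c x\<bar> \<le> Pm c"
proof -
  have "\<bar>cc1 c\<bar> * \<bar>1 - x\<bar> \<le> \<bar>cc1 c\<bar> * 2" using assms by (intro mult_left_mono) auto
  hence "\<bar>cc1 c * (1 - x)\<bar> \<le> 2 * \<bar>cc1 c\<bar>" by (simp add: abs_mult)
  moreover have "\<bar>cc2 c\<bar> * \<bar>1 + x\<bar> \<le> \<bar>cc2 c\<bar> * 2" using assms by (intro mult_left_mono) auto
  hence "\<bar>cc2 c * (1 + x)\<bar> \<le> 2 * \<bar>cc2 c\<bar>" by (simp add: abs_mult)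
  moreover have "\<bar>1 - x\<^sup>2\<bar> \<le> 1" using assms by (simp add: abs_square_less_1 less_imp_le)
  hence "\<bar>cc3 c * (1 - x\<^sup>2)\<bar> \<le> \<bar>cc3 c\<bar>" by (simp add: abs_mult mult_left_le)
  ultimately show ?thesis unfolding Pc_def Pm_def by linarith
qed

lemma G_big:
  assumes "-1 < x" "x < 1" "\<bar>u\<bar> \<ge> Rb c"
  shows "G c x u \<le> - u\<^sup>2 / 4"
proof -
  have P: "\<bar>Pc c x\<bar> \<le> Pm c" by (rule Pc_bound) (use assms in auto)
  have Pm0: "Pm c \<ge> 0" unfolding Pm_def by simp
  have xu: "- 2 * x * u \<le> 2 * \<bar>u\<bar>"
  proof -
    have "\<bar>2 * x * u\<bar> \<le> 2 * \<bar>u\<bar>" using assms by (simp add: abs_mult mult_left_le_one_le)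
    thus ?thesis by linarith
  qed
  have u9: "\<bar>u\<bar> - 8 \<ge> 1 + Pm c" using assms unfolding Rb_def by simp
  have "\<bar>u\<bar> * (\<bar>u\<bar> - 8) \<ge> (9 + Pm c) * (1 + Pm c)"
    using assms u9 Pm0 unfolding Rb_def by (intro mult_mono) auto
  moreover have "(9 + Pm c) * (1 + Pm c) \<ge> 4 * Pm c" using Pm0 by (simp add: algebra_simps)
  moreover have "u\<^sup>2 = \<bar>u\<bar> * \<bar>u\<bar>" by (simp add: power2_eq_square abs_mult[symmetric])
  ultimately have "u\<^sup>2 / 4 \<ge> 2 * \<bar>u\<bar> + Pm c" by (simp add: algebra_simps)
  thus ?thesis using P xu unfolding G_def by linarith
qed

lemma apriori_upper:
  assumes sol: "is_sol c U" and x0: "-1 < x0" "x0 < 1"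
  shows "U x0 < Rb c"
proof (rule ccontr)
  assume "\<not> U x0 < Rb c"
  hence U0: "U x0 \<ge> Rb c" by simp
  have R9: "Rb c \<ge> 9" unfolding Rb_def Pm_def by simp
  have geR: "U t \<ge> Rb c" if t: "-1 < t" "t \<le> x0" for t
  proof -
    have "(\<lambda>t. U t - Rb c) t \<ge> 0"
    proof (rule barrier_left[of t x0 _ "\<lambda>t. G c t (U t) / (1 - t\<^sup>2)"])
      show "t \<le> x0" by fact
      fix u assume u: "t \<le> u" "u \<le> x0"
      show "((\<lambda>t. U t - Rb c) has_real_derivative G c u (U u) / (1 - u\<^sup>2)) (at u)"
        using sol_der[OF sol, of u] u t x0 by (auto intro!: derivative_eq_intros)
      assume "U u - Rb c = 0"
      hence Uu: "U u = Rb c" by simp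
      have "G c u (U u) \<le> - (U u)\<^sup>2 / 4" by (rule G_big) (use u t x0 Uu R9 in auto)
      moreover have "(U u)\<^sup>2 > 0" using Uu R9 by simp
      ultimately have "G c u (U u) < 0" by linarith
      moreover have "1 - u\<^sup>2 > 0" using u t x0 by (simp add: abs_square_less_1)
      ultimately show "G c u (U u) / (1 - u\<^sup>2) < 0" by (simp add: divide_neg_pos)
    next
      show "U x0 - Rb c \<ge> 0" using U0 by simp
    qed
    thus ?thesis by simp
  qed
  define phi where "phi t = 1 / U t - ln (1 + t) / 8" for t
  define x where "x = -1 + (1 + x0) * exp (- (8 / U x0) - 1)"
  have "8 / U x0 > 0" using U0 R9 by simp
  hence "- (8 / U x0) - 1 \<le> 0" by linarith
  hence ex: "exp (- (8 / U x0) - 1) \<le> 1" by simp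
  have m1: "(1 + x0) * exp (- (8 / U x0) - 1) \<le> 1 + x0" using mult_left_mono[OF ex, of "1+x0"] x0 by simp
  have m2: "(1 + x0) * exp (- (8 / U x0) - 1) > 0" using x0 by simp
  have x: "-1 < x" "x \<le> x0" unfolding x_def using m1 m2 by linarith+
  have "phi x \<le> phi x0"
  proof (rule DERIV_nonneg_imp_nondecreasing[OF x(2)])
    fix t assume t: "x \<le> t" "t \<le> x0"
    hence t1: "-1 < t" "t < 1" using x x0 by auto
    have Ut: "U t \<ge> Rb c" using geR t1 t by auto
    hence Upos: "U t > 0" using R9 by simp
    have pos: "1 - t\<^sup>2 > 0" using t1 by (simp add: abs_square_less_1)
    have der: "(phi has_real_derivative (- (G c t (U t) / (1 - t\<^sup>2)) / (U t)\<^sup>2 - 1 / (1 + t) / 8)) (at t)"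
      unfolding phi_def using t1 Upos
      by (intro DERIV_diff der_recip sol_der[OF sol t1] DERIV_cdivide der_ln_p) auto
    have Gb: "G c t (U t) \<le> - (U t)\<^sup>2 / 4" by (rule G_big) (use t1 Ut R9 in auto)
    have U2: "(U t)\<^sup>2 > 0" using Upos by simp
    have g1: "- G c t (U t) / (U t)\<^sup>2 \<ge> 1/4" using Gb U2 by (simp add: field_simps)
    have "- (G c t (U t) / (1 - t\<^sup>2)) / (U t)\<^sup>2 = (- G c t (U t) / (U t)\<^sup>2) / (1 - t\<^sup>2)"
      by (simp add: divide_divide_eq_left mult.commute)
    also have "\<dots> \<ge> (1/4) / (1 - t\<^sup>2)" using g1 pos by (intro divide_right_mono) auto
    finally have "- (G c t (U t) / (1 - t\<^sup>2)) / (U t)\<^sup>2 \<ge> 1 / (4 * (1 - t\<^sup>2))" by simp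
    moreover have "1 / (4 * (1 - t\<^sup>2)) \<ge> 1 / (1 + t) / 8"
    proof -
      have e: "8*(1+t) - 4*(1-t\<^sup>2) = 4*(1+t)\<^sup>2" by (simp add: power2_eq_square algebra_simps)
      have "(1+t)\<^sup>2 \<ge> 0" by simp
      hence "4*(1-t\<^sup>2) \<le> 8*(1+t)" using e by linarith
      hence "1 / (8*(1+t)) \<le> 1 / (4 * (1 - t\<^sup>2))" using pos t1 by (intro divide_left_mono) auto
      thus ?thesis by (simp add: mult.commute)
    qed
    ultimately show "\<exists>y. (phi has_real_derivative y) (at t) \<and> 0 \<le> y" using der by force
  qed
  moreover have "ln (1 + x) = ln (1 + x0) - 8 / U x0 - 1"
    unfolding x_def using x0 by (simp add: ln_mult)
  ultimately have "1 / U x \<le> - 1 / 8" unfolding phi_def by (simp add: field_simps)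
  moreover have "U x > 0" using geR[OF x] R9 by simp
  hence "1 / U x > 0" by simp
  ultimately show False by linarith
qed



lemma apriori_lower:
  assumes sol: "is_sol c U" and x0: "-1 < x0" "x0 < 1"
  shows "U x0 > - Rb c"
proof (rule ccontr)
  assume "\<not> U x0 > - Rb c"
  hence U0: "U x0 \<le> - Rb c" by simp
  have R9: "Rb c \<ge> 9" unfolding Rb_def Pm_def by simp
  have leR: "U t \<le> - Rb c" if t: "x0 \<le> t" "t < 1" for t
  proof -
    have "(\<lambda>t. - Rb c - U t) t \<ge> 0"
    proof (rule barrier_right[of x0 t _ "\<lambda>t. - (G c t (U t) / (1 - t\<^sup>2))"])
      show "x0 \<le> t" by fact
      fix u assume u: "x0 \<le> u" "u \<le> t"
      show "((\<lambda>t. - Rb c - U t) has_real_derivative - (G c u (U u) / (1 - u\<^sup>2))) (at u)"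
        using sol_der[OF sol, of u] u t x0 by (auto intro!: derivative_eq_intros)
      assume "- Rb c - U u = 0"
      hence Uu: "U u = - Rb c" by simp
      have "G c u (U u) \<le> - (U u)\<^sup>2 / 4" by (rule G_big) (use u t x0 Uu R9 in auto)
      moreover have "(U u)\<^sup>2 > 0" using Uu R9 by simp
      ultimately have "G c u (U u) < 0" by linarith
      moreover have "1 - u\<^sup>2 > 0" using u t x0 by (simp add: abs_square_less_1)
      ultimately show "- (G c u (U u) / (1 - u\<^sup>2)) > 0" by (simp add: divide_neg_pos)
    next
      show "- Rb c - U x0 \<ge> 0" using U0 by simp
    qed
    thus ?thesis by simp
  qed
  define psi where "psi t = - (1 / U t) - ln (1 - t) / 8" for t
  define x where "x = 1 - (1 - x0) * exp (8 / U x0 - 1)"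
  have "8 / U x0 < 0" using U0 R9 by (simp add: divide_pos_neg)
  hence "8 / U x0 - 1 \<le> 0" by linarith
  hence ex: "exp (8 / U x0 - 1) \<le> 1" by simp
  have m1: "(1 - x0) * exp (8 / U x0 - 1) \<le> 1 - x0" using mult_left_mono[OF ex, of "1-x0"] x0 by simp
  have m2: "(1 - x0) * exp (8 / U x0 - 1) > 0" using x0 by simp
  have x: "x < 1" "x0 \<le> x" unfolding x_def using m1 m2 by linarith+
  have "psi x0 \<ge> psi x"
  proof (rule DERIV_nonpos_imp_nonincreasing[OF x(2)])
    fix t assume t: "x0 \<le> t" "t \<le> x"
    hence t1: "-1 < t" "t < 1" using x x0 by auto
    have Ut: "U t \<le> - Rb c" using leR t1 t by auto
    hence Uneg: "U t < 0" using R9 by simp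
    have pos: "1 - t\<^sup>2 > 0" using t1 by (simp add: abs_square_less_1)
    have der: "(psi has_real_derivative (- (- (G c t (U t) / (1 - t\<^sup>2)) / (U t)\<^sup>2) - - 1 / (1 - t) / 8)) (at t)"
      unfolding psi_def using t1 Uneg
      by (intro DERIV_diff DERIV_minus der_recip sol_der[OF sol t1] DERIV_cdivide der_ln_m) auto
    have Gb: "G c t (U t) \<le> - (U t)\<^sup>2 / 4" by (rule G_big) (use t1 Ut R9 in auto)
    have U2: "(U t)\<^sup>2 > 0" using Uneg by simp
    have g1: "G c t (U t) / (U t)\<^sup>2 \<le> - 1/4" using Gb U2 by (simp add: field_simps)
    have "(G c t (U t) / (1 - t\<^sup>2)) / (U t)\<^sup>2 = (G c t (U t) / (U t)\<^sup>2) / (1 - t\<^sup>2)"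
      by (simp add: divide_divide_eq_left mult.commute)
    also have "\<dots> \<le> (- 1/4) / (1 - t\<^sup>2)" using g1 pos by (intro divide_right_mono) auto
    finally have A: "(G c t (U t) / (1 - t\<^sup>2)) / (U t)\<^sup>2 \<le> - 1 / (4 * (1 - t\<^sup>2))" by simp
    have B: "1 / (4 * (1 - t\<^sup>2)) \<ge> 1 / (1 - t) / 8"
    proof -
      have e: "8*(1-t) - 4*(1-t\<^sup>2) = 4*(1-t)\<^sup>2" by (simp add: power2_eq_square algebra_simps)
      have "(1-t)\<^sup>2 \<ge> 0" by simp
      hence "4*(1-t\<^sup>2) \<le> 8*(1-t)" using e by linarith
      hence "1 / (8*(1-t)) \<le> 1 / (4 * (1 - t\<^sup>2))" using pos t1 by (intro divide_left_mono) auto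
      thus ?thesis by (simp add: mult.commute)
    qed
    have "- (- (G c t (U t) / (1 - t\<^sup>2)) / (U t)\<^sup>2) - - 1 / (1 - t) / 8
        = (G c t (U t) / (1 - t\<^sup>2)) / (U t)\<^sup>2 + 1 / (1 - t) / 8" by simp
    also have "\<dots> \<le> 0" using A B by simp
    finally show "\<exists>y. (psi has_real_derivative y) (at t) \<and> y \<le> 0" using der by force
  qed
  moreover have "ln (1 - x) = ln (1 - x0) + 8 / U x0 - 1"
    unfolding x_def using x0 by (simp add: ln_mult)
  ultimately have "- (1 / U x) \<le> - 1 / 8" unfolding psi_def by (simp add: field_simps)
  moreover have "U x < 0" using leR[of x] x x0 R9 by simp
  hence "- (1 / U x) > 0" by simp
  ultimately show False by linarith
qed

lemma apriori:
  assumes sol: "is_sol c U" and x0: "-1 < x0" "x0 < 1"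
  shows "\<bar>U x0\<bar> < Rb c"
  using apriori_lower[OF assms] apriori_upper[OF assms] by auto



lemma norm_cc:
  fixes d :: param
  shows "\<bar>cc1 d\<bar> \<le> norm d" "\<bar>cc2 d\<bar> \<le> norm d" "\<bar>cc3 d\<bar> \<le> norm d"
proof -
  obtain a b e where d: "d = (a, b, e)" by (cases d) auto
  have n1: "norm a \<le> norm d" "norm (b, e) \<le> norm d" unfolding d by (rule norm_fst_le, rule norm_snd_le)
  have n1': "\<bar>a\<bar> \<le> norm d" using n1 by simp
  have n2: "norm b \<le> norm (b, e)" "norm e \<le> norm (b, e)" by (rule norm_fst_le, rule norm_snd_le)
  show "\<bar>cc1 d\<bar> \<le> norm d" "\<bar>cc2 d\<bar> \<le> norm d" "\<bar>cc3 d\<bar> \<le> norm d"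
    using n1' n1(2) n2 by (auto simp: cc1_def cc2_def cc3_def d)
qed

lemma Pm_norm: "Pm d \<le> 5 * norm d"
  using norm_cc[of d] unfolding Pm_def by linarith

lemma Pc_diff: "Pc c x - Pc c' x = Pc (c - c') x"
  unfolding Pc_def cc1_def cc2_def cc3_def by (simp add: algebra_simps)

lemma G_diff: "G c t u - G c' t u' = Pc (c - c') t - (u - u') * (2 * t + (u + u') / 2)"
proof -
  have "2 * (G c t u - G c' t u') = 2 * (Pc c t - Pc c' t) - (u - u') * (4 * t + (u + u'))"
    unfolding G_def by (simp add: algebra_simps power2_eq_square)
  also have "\<dots> = 2 * (Pc (c - c') t - (u - u') * (2 * t + (u + u') / 2))"
    using Pc_diff[of c t c'] by (simp add: field_simps)
  finally show ?thesis by simp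
qed

lemma one_minus_sq:
  fixes \<sigma> t :: real
  assumes "0 < \<sigma>" "\<sigma> \<le> 1" "-1 + \<sigma> \<le> t" "t \<le> 1 - \<sigma>"
  shows "1 - t\<^sup>2 \<ge> \<sigma>"
proof (cases "t \<ge> 0")
  case True
  have "(1 + t) * (1 - t) \<ge> 1 * \<sigma>" using mult_mono[of 1 "1+t" \<sigma> "1-t"] assms True by auto
  thus ?thesis by (simp add: power2_eq_square algebra_simps)
next
  case False
  have "(1 + t) * (1 - t) \<ge> \<sigma> * 1" using mult_mono[of \<sigma> "1+t" 1 "1-t"] assms False by auto
  thus ?thesis by (simp add: power2_eq_square algebra_simps)
qed

lemma sol_diff_gen:
  assumes solU: "is_sol c U" and solV: "is_sol c' V"
    and s: "0 < \<sigma>" "\<sigma> \<le> 1"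
    and z: "-1 + \<sigma> \<le> z" "z \<le> 1 - \<sigma>" and x: "-1 + \<sigma> \<le> x" "x \<le> 1 - \<sigma>"
    and R: "Rb c \<le> R" "Rb c' \<le> R"
  shows "\<bar>U x - V x\<bar> \<le> (\<bar>U z - V z\<bar> + 5 * norm (c - c') / \<sigma>) * exp (((2 + R) / \<sigma> + 1) * \<bar>x - z\<bar>)"
proof (rule gronwall[where lo = "-1+\<sigma>" and hi = "1-\<sigma>"])
  show "-1 + \<sigma> \<le> z" "z \<le> 1 - \<sigma>" "-1 + \<sigma> \<le> x" "x \<le> 1 - \<sigma>" by fact+
  show "(2 + R) / \<sigma> \<ge> 0" using R s unfolding Rb_def Pm_def by simp
  show "5 * norm (c - c') / \<sigma> \<ge> 0" using s by simp
  fix t assume t: "-1 + \<sigma> \<le> t" "t \<le> 1 - \<sigma>"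
  hence t1: "-1 < t" "t < 1" using s by auto
  show "((\<lambda>t. U t - V t) has_real_derivative G c t (U t) / (1 - t\<^sup>2) - G c' t (V t) / (1 - t\<^sup>2)) (at t)"
    using sol_der[OF solU t1] sol_der[OF solV t1] by (rule DERIV_diff)
  have pos: "1 - t\<^sup>2 \<ge> \<sigma>" by (rule one_minus_sq) (use s t in auto)
  have bU: "\<bar>U t\<bar> < Rb c" and bV: "\<bar>V t\<bar> < Rb c'" using apriori[OF solU t1] apriori[OF solV t1] .
  have u4: "U t < R" "- U t < R" "V t < R" "- V t < R" using bU bV R by (auto simp: abs_less_iff)
  have h: "\<bar>2 * t + (U t + V t) / 2\<bar> \<le> 2 + R" unfolding abs_le_iff using u4 t1 by (simp add: field_simps)
  have P: "\<bar>Pc (c - c') t\<bar> \<le> 5 * norm (c - c')" using Pc_bound[OF t1, of "c - c'"] Pm_norm[of "c - c'"] by linarith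
  have num: "\<bar>G c t (U t) - G c' t (V t)\<bar> \<le> 5 * norm (c - c') + (2 + R) * \<bar>U t - V t\<bar>"
  proof -
    have "\<bar>(U t - V t) * (2 * t + (U t + V t) / 2)\<bar> \<le> \<bar>U t - V t\<bar> * (2 + R)"
      unfolding abs_mult by (rule mult_left_mono[OF h]) simp
    thus ?thesis unfolding G_diff using P by (simp add: algebra_simps)
  qed
  have "G c t (U t) / (1 - t\<^sup>2) - G c' t (V t) / (1 - t\<^sup>2) = (G c t (U t) - G c' t (V t)) / (1 - t\<^sup>2)"
    by (simp add: diff_divide_distrib)
  hence "\<bar>G c t (U t) / (1 - t\<^sup>2) - G c' t (V t) / (1 - t\<^sup>2)\<bar> = \<bar>G c t (U t) - G c' t (V t)\<bar> / (1 - t\<^sup>2)"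
    using pos s by simp
  also have "\<dots> \<le> (5 * norm (c - c') + (2 + R) * \<bar>U t - V t\<bar>) / \<sigma>"
    using num pos s by (intro frac_le) auto
  also have "\<dots> = (2 + R) / \<sigma> * \<bar>U t - V t\<bar> + 5 * norm (c - c') / \<sigma>"
    using s by (simp add: field_simps)
  finally show "\<bar>G c t (U t) / (1 - t\<^sup>2) - G c' t (V t) / (1 - t\<^sup>2)\<bar> \<le> (2 + R) / \<sigma> * \<bar>U t - V t\<bar> + 5 * norm (c - c') / \<sigma>" .
qed

lemma sol_unique_pt:
  assumes solU: "is_sol c U" and solV: "is_sol c V" and z: "-1 < z" "z < 1" "U z = V z"
    and x: "-1 < x" "x < 1"
  shows "U x = V x"
proof -
  define \<sigma> where "\<sigma> = min (1 - \<bar>z\<bar>) (1 - \<bar>x\<bar>)"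
  have s: "0 < \<sigma>" "\<sigma> \<le> 1" unfolding \<sigma>_def using z x by auto
  have "\<bar>U x - V x\<bar> \<le> (\<bar>U z - V z\<bar> + 5 * norm (c - c) / \<sigma>) * exp (((2 + max (Rb c) (Rb c)) / \<sigma> + 1) * \<bar>x - z\<bar>)"
    by (rule sol_diff_gen[OF solU solV s]) (use z x in \<open>auto simp: \<sigma>_def\<close>)
  thus ?thesis using z by simp
qed



definition beta :: "param \<Rightarrow> real \<Rightarrow> real \<Rightarrow> real" where
  "beta c a x = cc2 c - cc1 c + cc3 c * (1 - x) - 2 * (2 - 2 * a)"

lemma G_expand:
  assumes "a\<^sup>2 = 1 + cc1 c"
  shows "G c x (2 - 2*a + v) = v * (2*a - v/2 - 2*(1+x)) + (1+x) * beta c a x"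
proof -
  have c1: "cc1 c = a\<^sup>2 - 1" using assms by simp
  show ?thesis unfolding G_def Pc_def beta_def c1 by (simp add: field_simps power2_eq_square)
qed

lemma beta_bound:
  assumes "-1 < x" "x < 1" "a \<ge> 0"
  shows "\<bar>beta c a x\<bar> \<le> \<bar>cc2 c\<bar> + \<bar>cc1 c\<bar> + 2 * \<bar>cc3 c\<bar> + 4 + 4 * a"
proof -
  have "\<bar>cc3 c * (1 - x)\<bar> \<le> 2 * \<bar>cc3 c\<bar>"
  proof -
    have "\<bar>cc3 c\<bar> * \<bar>1 - x\<bar> \<le> \<bar>cc3 c\<bar> * 2" using assms by (intro mult_left_mono) auto
    thus ?thesis by (simp add: abs_mult mult.commute)
  qed
  moreover have "\<bar>2 * (2 - 2 * a)\<bar> \<le> 4 + 4 * a" using assms by (simp add: abs_le_iff)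
  ultimately show ?thesis unfolding beta_def by (simp add: abs_le_iff) linarith
qed

lemma core_up:
  fixes w s a \<mu> \<epsilon>1 b B :: real
  assumes w: "w > 0" "w \<le> \<epsilon>1" and s: "s > 0" "2 * s \<le> \<epsilon>1 / 2"
    and am: "a - \<mu> \<ge> \<epsilon>1" "\<mu> \<ge> 0" and b: "\<bar>b\<bar> \<le> B" and VB: "w * \<epsilon>1 > s * B"
  shows "w * (2*a - w/2 - 2* s) + s * b > \<mu> * w * (2 - s)"
proof -
  have p: "2*a - 2*\<mu> - w/2 - 2* s + \<mu>* s \<ge> \<epsilon>1"
  proof -
    have "\<mu> * s \<ge> 0" using am s by simp
    thus ?thesis using w s am by linarith
  qed
  have "w * (2*a - 2*\<mu> - w/2 - 2* s + \<mu>* s) \<ge> w * \<epsilon>1" using p w by (intro mult_left_mono) auto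
  moreover have "s * b \<ge> - (s * B)"
  proof -
    have "\<bar>s * b\<bar> \<le> s * B" using b s by (simp add: abs_mult mult_left_mono)
    thus ?thesis by linarith
  qed
  moreover have "w * (2*a - w/2 - 2* s) - \<mu> * w * (2 - s) = w * (2*a - 2*\<mu> - w/2 - 2* s + \<mu>* s)"
    by (simp add: algebra_simps)
  ultimately show ?thesis using VB by linarith
qed

lemma core_low:
  fixes w s a \<mu> \<epsilon>1 b B :: real
  assumes w: "w < 0" and s: "s > 0" "2 * s \<le> \<epsilon>1 / 2"
    and am: "a - \<mu> \<ge> \<epsilon>1" "\<mu> \<ge> 0" and b: "\<bar>b\<bar> \<le> B" and VB: "- w * \<epsilon>1 > s * B"
  shows "w * (2*a - w/2 - 2* s) + s * b < \<mu> * w * (2 - s)"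
proof -
  have p: "2*a - 2*\<mu> - w/2 - 2* s + \<mu>* s \<ge> \<epsilon>1"
  proof -
    have "\<mu> * s \<ge> 0" using am s by simp
    thus ?thesis using w s am by linarith
  qed
  have "w * (2*a - 2*\<mu> - w/2 - 2* s + \<mu>* s) \<le> w * \<epsilon>1" using p w by (intro mult_left_mono_neg) auto
  moreover have "s * b \<le> s * B"
  proof -
    have "\<bar>s * b\<bar> \<le> s * B" using b s by (simp add: abs_mult mult_left_mono)
    thus ?thesis by linarith
  qed
  moreover have "w * (2*a - w/2 - 2* s) - \<mu> * w * (2 - s) = w * (2*a - 2*\<mu> - w/2 - 2* s + \<mu>* s)"
    by (simp add: algebra_simps)
  ultimately show ?thesis using VB by linarith
qed

lemma der_powr_shift:
  "0 < 1 + t \<Longrightarrow> ((\<lambda>t. (1 + t) powr \<mu>) has_real_derivative \<mu> * (1 + t) powr (\<mu> - 1)) (at t)"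
  by (rule DERIV_cong[OF DERIV_fun_powr[of "\<lambda>t. 1 + t" 1]]) (auto intro!: derivative_eq_intros)

lemma powr_m1: fixes s \<mu> :: real shows "0 < s \<Longrightarrow> s powr (\<mu> - 1) = s powr \<mu> / s"
  by (simp add: powr_diff)

lemma s_le_powr: fixes s \<mu> :: real shows "0 < s \<Longrightarrow> s \<le> 1 \<Longrightarrow> \<mu> \<le> 1 \<Longrightarrow> s \<le> s powr \<mu>"
  using powr_mono'[of \<mu> 1 s] by (simp add: powr_one)



lemma trap_upper:
  fixes A \<mu> \<epsilon>1 s0 B a :: real
  assumes sol: "is_sol c U" and a: "a = sqrt (1 + cc1 c)" "cc1 c > -1"
    and e1: "0 < \<epsilon>1" and mu: "0 \<le> \<mu>" "\<mu> \<le> 1" "a - \<mu> \<ge> \<epsilon>1"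
    and s0: "0 < s0" "2 * s0 \<le> \<epsilon>1 / 2" "s0 \<le> 1"
    and B: "\<bar>cc2 c\<bar> + \<bar>cc1 c\<bar> + 2 * \<bar>cc3 c\<bar> + 4 + 4 * a \<le> B"
    and A: "A * \<epsilon>1 > B" "A * s0 powr \<mu> \<le> \<epsilon>1"
    and start: "U (-1 + s0) - (2 - 2 * a) \<le> A * s0 powr \<mu>"
    and x: "-1 < x" "x \<le> -1 + s0"
  shows "U x - (2 - 2 * a) \<le> A * (1 + x) powr \<mu>"
proof -
  have a0: "a \<ge> 0" unfolding a(1) by (rule real_sqrt_ge_zero) (use a(2) in linarith)
  have a2: "a\<^sup>2 = 1 + cc1 c" unfolding a(1) by (rule real_sqrt_pow2) (use a(2) in linarith)
  have B0: "B \<ge> 0" using B a0 by linarith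
  have Apos: "A > 0"
  proof (rule ccontr)
    assume "\<not> A > 0"
    hence "A * \<epsilon>1 \<le> 0" using e1 by (simp add: mult_nonpos_nonneg)
    thus False using A B0 by linarith
  qed
  define f where "f t = A * (1 + t) powr \<mu> - (U t - (2 - 2 * a))" for t
  have "f x \<ge> 0"
  proof (rule barrier_left[of x "-1 + s0" f "\<lambda>t. A * (\<mu> * (1 + t) powr (\<mu> - 1)) - (G c t (U t) / (1 - t\<^sup>2) - 0)"])
    show "x \<le> -1 + s0" by fact
    fix t assume t: "x \<le> t" "t \<le> -1 + s0"
    have t1: "-1 < t" "t < 1" using t x s0 by auto
    show "(f has_real_derivative A * (\<mu> * (1 + t) powr (\<mu> - 1)) - (G c t (U t) / (1 - t\<^sup>2) - 0)) (at t)"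
      unfolding f_def using t1
      by (intro DERIV_diff DERIV_cmult der_powr_shift sol_der[OF sol t1] DERIV_const) auto
    assume fz: "f t = 0"
    define s where "s = 1 + t"
    define w where "w = U t - (2 - 2 * a)"
    have s: "0 < s" "s \<le> s0" "s \<le> 1" using t1 t s0 unfolding s_def by auto
    have sp: "s powr \<mu> > 0" using s by simp
    have w: "w = A * s powr \<mu>" using fz unfolding f_def w_def s_def by simp
    have wpos: "w > 0" using w Apos sp by simp
    have "s powr \<mu> \<le> s0 powr \<mu>" using s mu by (intro powr_mono2) auto
    hence "w \<le> A * s0 powr \<mu>" unfolding w using Apos by (simp add: mult_left_mono)
    hence wle: "w \<le> \<epsilon>1" using A by linarith
    have ss: "2 * s \<le> \<epsilon>1 / 2" using s s0 by linarith
    have bb: "\<bar>beta c a t\<bar> \<le> B" using beta_bound[OF t1 a0, of c] B by linarith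
    have "s \<le> s powr \<mu>" using s mu by (intro s_le_powr) auto
    hence "s * B \<le> s powr \<mu> * B" using B0 by (simp add: mult_right_mono)
    also have "\<dots> < s powr \<mu> * (A * \<epsilon>1)" using A sp by (intro mult_strict_left_mono) auto
    also have "\<dots> = w * \<epsilon>1" unfolding w by simp
    finally have wB: "w * \<epsilon>1 > s * B" .
    have core: "w * (2*a - w/2 - 2 * s) + s * beta c a t > \<mu> * w * (2 - s)"
      by (rule core_up[OF wpos wle s(1) ss mu(3) mu(1) bb wB])
    have Ut: "U t = 2 - 2 * a + w" unfolding w_def by simp
    have Gt: "G c t (U t) > \<mu> * w * (2 - s)"
      using core unfolding Ut G_expand[OF a2] s_def by simp
    have den: "1 - t\<^sup>2 = s * (2 - s)" unfolding s_def by (simp add: power2_eq_square algebra_simps)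
    have den0: "s * (2 - s) > 0" using s by simp
    have "G c t (U t) / (1 - t\<^sup>2) > \<mu> * w * (2 - s) / (s * (2 - s))"
      unfolding den using Gt den0 by (rule divide_strict_right_mono)
    also have "\<mu> * w * (2 - s) / (s * (2 - s)) = A * (\<mu> * (1 + t) powr (\<mu> - 1))"
      unfolding w powr_m1[OF s(1)] s_def[symmetric] using s by (simp add: field_simps)
    finally show "A * (\<mu> * (1 + t) powr (\<mu> - 1)) - (G c t (U t) / (1 - t\<^sup>2) - 0) < 0" by simp
  next
    show "f (-1 + s0) \<ge> 0" unfolding f_def using start by simp
  qed
  thus ?thesis unfolding f_def by simp
qed

lemma trap_lower:
  fixes A \<mu> \<epsilon>1 s0 B a :: real
  assumes sol: "is_sol c U" and a: "a = sqrt (1 + cc1 c)" "cc1 c > -1"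
    and e1: "0 < \<epsilon>1" and mu: "0 \<le> \<mu>" "\<mu> \<le> 1" "a - \<mu> \<ge> \<epsilon>1"
    and s0: "0 < s0" "2 * s0 \<le> \<epsilon>1 / 2" "s0 \<le> 1"
    and B: "\<bar>cc2 c\<bar> + \<bar>cc1 c\<bar> + 2 * \<bar>cc3 c\<bar> + 4 + 4 * a \<le> B"
    and A: "A * \<epsilon>1 > B"
    and start: "U (-1 + s0) - (2 - 2 * a) \<ge> - A * s0 powr \<mu>"
    and x: "-1 < x" "x \<le> -1 + s0"
  shows "U x - (2 - 2 * a) \<ge> - A * (1 + x) powr \<mu>"
proof -
  have a0: "a \<ge> 0" unfolding a(1) by (rule real_sqrt_ge_zero) (use a(2) in linarith)
  have a2: "a\<^sup>2 = 1 + cc1 c" unfolding a(1) by (rule real_sqrt_pow2) (use a(2) in linarith)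
  have B0: "B \<ge> 0" using B a0 by linarith
  have Apos: "A > 0"
  proof (rule ccontr)
    assume "\<not> A > 0"
    hence "A * \<epsilon>1 \<le> 0" using e1 by (simp add: mult_nonpos_nonneg)
    thus False using A B0 by linarith
  qed
  define f where "f t = (U t - (2 - 2 * a)) + A * (1 + t) powr \<mu>" for t
  have "f x \<ge> 0"
  proof (rule barrier_left[of x "-1 + s0" f "\<lambda>t. (G c t (U t) / (1 - t\<^sup>2) - 0) + A * (\<mu> * (1 + t) powr (\<mu> - 1))"])
    show "x \<le> -1 + s0" by fact
    fix t assume t: "x \<le> t" "t \<le> -1 + s0"
    have t1: "-1 < t" "t < 1" using t x s0 by auto
    show "(f has_real_derivative (G c t (U t) / (1 - t\<^sup>2) - 0) + A * (\<mu> * (1 + t) powr (\<mu> - 1))) (at t)"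
      unfolding f_def using t1
      by (intro DERIV_add DERIV_diff DERIV_cmult der_powr_shift sol_der[OF sol t1] DERIV_const) auto
    assume fz: "f t = 0"
    define s where "s = 1 + t"
    define w where "w = U t - (2 - 2 * a)"
    have s: "0 < s" "s \<le> s0" "s \<le> 1" using t1 t s0 unfolding s_def by auto
    have sp: "s powr \<mu> > 0" using s by simp
    have w: "w = - (A * s powr \<mu>)" using fz unfolding f_def w_def s_def by simp
    have wneg: "w < 0" using w Apos sp by simp
    have ss: "2 * s \<le> \<epsilon>1 / 2" using s s0 by linarith
    have bb: "\<bar>beta c a t\<bar> \<le> B" using beta_bound[OF t1 a0, of c] B by linarith
    have "s \<le> s powr \<mu>" using s mu by (intro s_le_powr) auto
    hence "s * B \<le> s powr \<mu> * B" using B0 by (simp add: mult_right_mono)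
    also have "\<dots> < s powr \<mu> * (A * \<epsilon>1)" using A sp by (intro mult_strict_left_mono) auto
    also have "\<dots> = - w * \<epsilon>1" unfolding w by simp
    finally have wB: "- w * \<epsilon>1 > s * B" .
    have core: "w * (2*a - w/2 - 2 * s) + s * beta c a t < \<mu> * w * (2 - s)"
      by (rule core_low[OF wneg s(1) ss mu(3) mu(1) bb wB])
    have Ut: "U t = 2 - 2 * a + w" unfolding w_def by simp
    have Gt: "G c t (U t) < \<mu> * w * (2 - s)"
      using core unfolding Ut G_expand[OF a2] s_def by simp
    have den: "1 - t\<^sup>2 = s * (2 - s)" unfolding s_def by (simp add: power2_eq_square algebra_simps)
    have den0: "s * (2 - s) > 0" using s by simp
    have "G c t (U t) / (1 - t\<^sup>2) < \<mu> * w * (2 - s) / (s * (2 - s))"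
      unfolding den using Gt den0 by (rule divide_strict_right_mono)
    also have "\<mu> * w * (2 - s) / (s * (2 - s)) = - (A * (\<mu> * (1 + t) powr (\<mu> - 1)))"
      unfolding w powr_m1[OF s(1)] s_def[symmetric] using s by (simp add: field_simps)
    finally show "(G c t (U t) / (1 - t\<^sup>2) - 0) + A * (\<mu> * (1 + t) powr (\<mu> - 1)) < 0" by simp
  next
    show "f (-1 + s0) \<ge> 0" unfolding f_def using start by simp
  qed
  thus ?thesis unfolding f_def by simp
qed



lemma maximal_gamma:
  assumes sol: "is_sol c U" and mx: "\<forall>Y. is_sol c Y \<longrightarrow> (\<forall>x. -1 < x \<and> x < 1 \<longrightarrow> Y x \<le> U x)"
  shows "gamma_plus c = U 0"
  unfolding gamma_plus_def
proof (rule the_equality)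
  show "\<exists>U'. is_sol c U' \<and> (\<forall>V. is_sol c V \<longrightarrow> (\<forall>x. -1 < x \<and> x < 1 \<longrightarrow> V x \<le> U' x)) \<and> U' 0 = U 0"
    using sol mx by blast
next
  fix g assume "\<exists>U'. is_sol c U' \<and> (\<forall>V. is_sol c V \<longrightarrow> (\<forall>x. -1 < x \<and> x < 1 \<longrightarrow> V x \<le> U' x)) \<and> U' 0 = g"
  then obtain U' where U': "is_sol c U'" "\<forall>V. is_sol c V \<longrightarrow> (\<forall>x. -1 < x \<and> x < 1 \<longrightarrow> V x \<le> U' x)" "U' 0 = g"
    by blast
  have "U 0 \<le> U' 0" using U'(2) sol by auto
  moreover have "U' 0 \<le> U 0" using mx U'(1) by auto
  ultimately show "g = U 0" using U'(3) by simp
qed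

lemma sol_cont:
  assumes sol: "is_sol c U" and "-1 < lo" "hi < 1"
  shows "continuous_on {lo..hi} U"
proof (rule continuous_at_imp_continuous_on, rule ballI)
  fix t assume "t \<in> {lo..hi}"
  hence "-1 < t" "t < 1" using assms by auto
  thus "isCont U t" using sol_der[OF sol] DERIV_isCont by blast
qed

lemma sol_order:
  assumes solU: "is_sol c U" and solY: "is_sol c Y"
    and x0: "-1 < x0" "x0 < 1" "Y x0 > U x0" and x: "-1 < x" "x < 1"
  shows "Y x > U x"
proof (rule ccontr)
  assume "\<not> Y x > U x"
  hence le: "Y x - U x \<le> 0" by simp
  have cont: "continuous_on {min x x0..max x x0} (\<lambda>t. Y t - U t)"
    using sol_cont[OF solY, of "min x x0" "max x x0"] sol_cont[OF solU, of "min x x0" "max x x0"] x x0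
    by (intro continuous_on_diff) auto
  obtain z where z: "min x x0 \<le> z" "z \<le> max x x0" "Y z - U z = 0"
  proof (cases "x \<le> x0")
    case True
    with IVT'[of "\<lambda>t. Y t - U t" x 0 x0] le x0 cont show ?thesis using that by auto
  next
    case False
    with IVT2'[of "\<lambda>t. Y t - U t" x 0 x0] le x0 cont show ?thesis using that by auto
  qed
  have "U x0 = Y x0"
    by (rule sol_unique_pt[OF solU solY, of z]) (use z x x0 in auto)
  thus False using x0 by simp
qed

lemma blowup_case:
  fixes a s2 :: real
  assumes solU: "is_sol c U" and solY: "is_sol c Y" and a: "a > 0"
    and s2: "0 < s2" "s2 < 1"
    and big: "\<And>s. 0 < s \<Longrightarrow> s \<le> s2 \<Longrightarrow> U (-1 + s) - (2 - 2 * a) \<ge> 3 * a"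
    and gt: "\<And>t. -1 < t \<Longrightarrow> t < 1 \<Longrightarrow> Y t > U t"
  shows False
proof -
  define W where "W t = Y t - U t" for t
  define R where "R = max (Rb c) (Rb c)"
  define phi where "phi t = ln (W t) + a / 2 * ln (1 + t)" for t
  define x2 where "x2 = -1 + s2"
  have x2: "-1 < x2" "x2 < 1" using s2 unfolding x2_def by auto
  have Wpos: "W t > 0" if "-1 < t" "t < 1" for t using gt[OF that] unfolding W_def by simp
  have Wbd: "W t < 2 * Rb c" if "-1 < t" "t < 1" for t
    using apriori[OF solU that] apriori[OF solY that] unfolding W_def by (simp add: abs_less_iff)
  have Rpos: "Rb c > 0" unfolding Rb_def Pm_def by simp
  define K where "K = ln (2 * Rb c) - ln (W x2) + 1"
  have K: "K \<ge> 0"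
  proof -
    have "ln (W x2) \<le> ln (2 * Rb c)" using Wbd[OF x2] Wpos[OF x2] by simp
    thus ?thesis unfolding K_def by simp
  qed
  define s where "s = s2 * exp (- (2 / a) * K)"
  have s: "0 < s" "s \<le> s2"
  proof -
    have "exp (- (2 / a) * K) \<le> 1" using K a by (simp add: mult_nonneg_nonneg)
    thus "s \<le> s2" unfolding s_def using s2 mult_left_mono[of "exp (- (2 / a) * K)" 1 s2] by simp
    show "0 < s" unfolding s_def using s2 by simp
  qed
  define x where "x = -1 + s"
  have x: "-1 < x" "x \<le> x2" using s unfolding x_def x2_def by auto
  have "phi x \<ge> phi x2"
  proof (rule DERIV_nonpos_imp_nonincreasing[OF x(2)])
    fix t assume t: "x \<le> t" "t \<le> x2"
    have t1: "-1 < t" "t < 1" using t x x2 by auto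
    define st where "st = 1 + t"
    have st: "0 < st" "st \<le> s2" using t1 t unfolding st_def x2_def by auto
    have Wt: "W t > 0" using Wpos t1 .
    have dW: "(W has_real_derivative G c t (Y t) / (1 - t\<^sup>2) - G c t (U t) / (1 - t\<^sup>2)) (at t)"
      unfolding W_def using sol_der[OF solY t1] sol_der[OF solU t1] by (rule DERIV_diff)
    have der: "(phi has_real_derivative
        (1 / W t * (G c t (Y t) / (1 - t\<^sup>2) - G c t (U t) / (1 - t\<^sup>2)) + a / 2 * (1 / (1 + t)))) (at t)"
      unfolding phi_def using t1 Wt
      by (intro DERIV_add DERIV_cmult der_ln_p DERIV_chain2[OF DERIV_ln_divide dW]) auto
    have Gd: "G c t (Y t) - G c t (U t) = - W t * (2 * t + (Y t + U t) / 2)"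
      unfolding G_diff W_def by (simp add: Pc_def cc1_def cc2_def cc3_def minus_mult_left)
    have Ubig: "U t - (2 - 2 * a) \<ge> 3 * a" using big[of st] st unfolding st_def by simp
    have hnum: "2 * t + (Y t + U t) / 2 \<ge> a"
    proof -
      have "Y t > U t" using gt t1 by simp
      hence "(Y t + U t) / 2 \<ge> U t" by simp
      thus ?thesis using Ubig t1 a by linarith
    qed
    have pos: "1 - t\<^sup>2 > 0" using t1 by (simp add: abs_square_less_1)
    have den: "1 - t\<^sup>2 \<le> 2 * (1 + t)"
    proof -
      have "2 * (1 + t) - (1 - t\<^sup>2) = (1 + t)\<^sup>2" by (simp add: power2_eq_square algebra_simps)
      moreover have "(1 + t)\<^sup>2 \<ge> 0" by simp
      ultimately show ?thesis by linarith
    qed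
    have "1 / W t * (G c t (Y t) / (1 - t\<^sup>2) - G c t (U t) / (1 - t\<^sup>2))
        = - ((2 * t + (Y t + U t) / 2) / (1 - t\<^sup>2))"
      using Wt pos by (simp add: diff_divide_distrib[symmetric] Gd)
    also have "\<dots> \<le> - (a / (1 - t\<^sup>2))"
    proof -
      have "a / (1 - t\<^sup>2) \<le> (2 * t + (Y t + U t) / 2) / (1 - t\<^sup>2)"
        using hnum pos by (intro divide_right_mono) auto
      thus ?thesis by linarith
    qed
    also have "\<dots> \<le> - (a / (2 * (1 + t)))"
    proof -
      have "a / (2 * (1 + t)) \<le> a / (1 - t\<^sup>2)" using a pos den by (intro divide_left_mono) auto
      thus ?thesis by linarith
    qed
    finally have "1 / W t * (G c t (Y t) / (1 - t\<^sup>2) - G c t (U t) / (1 - t\<^sup>2)) + a / 2 * (1 / (1 + t)) \<le> 0"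
      by simp
    thus "\<exists>y. (phi has_real_derivative y) (at t) \<and> y \<le> 0" using der by blast
  qed
  moreover have "ln (1 + x) = ln s2 - (2 / a) * K"
    unfolding x_def s_def using s2 by (simp add: ln_mult)
  ultimately have "ln (W x) \<ge> ln (W x2) + a / 2 * ((2 / a) * K)"
    unfolding phi_def x2_def by (simp add: algebra_simps)
  also have "a / 2 * ((2 / a) * K) = K" using a by simp
  finally have "ln (W x) \<ge> ln (2 * Rb c) + 1" unfolding K_def by simp
  moreover have "ln (W x) < ln (2 * Rb c)"
    using Wbd[of x] Wpos[of x] x x2 by simp
  ultimately show False by simp
qed



lemma climb_case:
  fixes a \<eta> B s1 :: real
  assumes sol: "is_sol c U" and a: "a = sqrt (1 + cc1 c)" "cc1 c > -1"
    and eta: "0 < \<eta>" "\<eta> \<le> a"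
    and B: "\<bar>cc2 c\<bar> + \<bar>cc1 c\<bar> + 2 * \<bar>cc3 c\<bar> + 4 + 4 * a \<le> B"
    and s1: "0 < s1" "s1 \<le> 1/2" "s1 * (6 * a + B) \<le> \<eta> * a / 4"
    and lt: "U (-1 + s1) - (2 - 2 * a) < 3 * a"
    and gt: "\<And>s. 0 < s \<Longrightarrow> s \<le> s1 \<Longrightarrow> U (-1 + s) - (2 - 2 * a) > \<eta>"
  shows False
proof -
  have a0: "a > 0" unfolding a(1) using a(2) by simp
  have gt': "U (-1 + s) - (2 - 2 * a) > \<eta>" if "0 < s" "s \<le> s1" for s using gt that by blast
  have a2: "a\<^sup>2 = 1 + cc1 c" unfolding a(1) by (rule real_sqrt_pow2) (use a(2) in linarith)
  have B0: "B \<ge> 0" using B a0 by linarith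
  define x1 where "x1 = -1 + s1"
  have x1: "-1 < x1" "x1 < 1" using s1 unfolding x1_def by auto
  have sB: "(1 + t) * beta c a t \<ge> - ((1 + t) * B)" and sle: "(1 + t) * (6 * a + B) \<le> \<eta> * a / 4"
    if t: "-1 < t" "t \<le> x1" for t
  proof -
    have t1: "-1 < t" "t < 1" using t x1 by auto
    have bb: "\<bar>beta c a t\<bar> \<le> B" using beta_bound[OF t1, of a c] a0 B by linarith
    have "\<bar>(1 + t) * beta c a t\<bar> \<le> (1 + t) * B" using bb t by (simp add: abs_mult mult_left_mono)
    thus "(1 + t) * beta c a t \<ge> - ((1 + t) * B)" by linarith
    have "(1 + t) * (6 * a + B) \<le> s1 * (6 * a + B)" using t a0 B0 unfolding x1_def by (intro mult_right_mono) auto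
    thus "(1 + t) * (6 * a + B) \<le> \<eta> * a / 4" using s1 by linarith
  qed
  have le3: "U t - (2 - 2 * a) \<le> 3 * a" if t: "-1 < t" "t \<le> x1" for t
  proof -
    define f where "f t = 3 * a - (U t - (2 - 2 * a))" for t
    have "f t \<ge> 0"
    proof (rule barrier_left[of t x1 f "\<lambda>t. 0 - (G c t (U t) / (1 - t\<^sup>2) - 0)"])
      show "t \<le> x1" by fact
      fix u assume u: "t \<le> u" "u \<le> x1"
      have u1: "-1 < u" "u < 1" using u t x1 by auto
      show "(f has_real_derivative 0 - (G c u (U u) / (1 - u\<^sup>2) - 0)) (at u)"
        unfolding f_def by (intro DERIV_diff DERIV_const sol_der[OF sol u1])
      assume "f u = 0"
      hence Uu: "U u = 2 - 2 * a + 3 * a" unfolding f_def by simp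
      have Ge: "G c u (U u) = 3 * a * (2 * a - 3 * a / 2 - 2 * (1 + u)) + (1 + u) * beta c a u"
        unfolding Uu G_expand[OF a2] by simp
      have "3 * a * (2 * a - 3 * a / 2 - 2 * (1 + u)) = 3 * a * a / 2 - 6 * a * (1 + u)"
        by (simp add: algebra_simps)
      moreover have "(1 + u) * (6 * a + B) = 6 * a * (1 + u) + (1 + u) * B" by (simp add: algebra_simps)
      moreover have "\<eta> * a \<le> a * a" using eta a0 by (simp add: mult_right_mono)
      moreover have "a * a > 0" using a0 by simp
      ultimately have "G c u (U u) > 0" using Ge sB[OF u1(1) u(2)] sle[OF u1(1) u(2)] by linarith
      moreover have "1 - u\<^sup>2 > 0" using u1 by (simp add: abs_square_less_1)
      ultimately show "0 - (G c u (U u) / (1 - u\<^sup>2) - 0) < 0" by simp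
    next
      show "f x1 \<ge> 0" unfolding f_def x1_def using lt by simp
    qed
    thus ?thesis unfolding f_def by simp
  qed
  define \<kappa> where "\<kappa> = \<eta> * a / 8"
  have kap: "\<kappa> > 0" unfolding \<kappa>_def using eta a0 by simp
  define psi where "psi t = U t - \<kappa> * ln (1 + t)" for t
  define q where "q = (3 * a + 1) / \<kappa>"
  have q: "q \<ge> 0" "\<kappa> * q = 3 * a + 1" unfolding q_def using kap a0 by auto
  define x where "x = -1 + s1 * exp (- q)"
  have ex: "exp (- q) \<le> 1" using q by simp
  have x: "-1 < x" "x \<le> x1" unfolding x_def x1_def using s1 ex mult_left_mono[OF ex, of s1] by auto
  have "psi x \<le> psi x1"
  proof (rule DERIV_nonneg_imp_nondecreasing[OF x(2)])
    fix t assume t: "x \<le> t" "t \<le> x1"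
    have t0: "-1 < t" using t x by auto
    have t1: "-1 < t" "t < 1" using t x x1 by auto
    have der: "(psi has_real_derivative G c t (U t) / (1 - t\<^sup>2) - \<kappa> * (1 / (1 + t))) (at t)"
      unfolding psi_def using t1 by (intro DERIV_diff DERIV_cmult der_ln_p sol_der[OF sol t1]) auto
    define w where "w = U t - (2 - 2 * a)"
    have w: "w > \<eta>" "w \<le> 3 * a" using gt'[of "1 + t"] le3[OF t0 t(2)] t t1 x1
      unfolding w_def x1_def by auto
    have Ge: "G c t (U t) = w * (2 * a - w / 2 - 2 * (1 + t)) + (1 + t) * beta c a t"
      unfolding w_def using G_expand[OF a2, of t w] by (simp add: w_def)
    have p1: "w * (4 * a - w) \<ge> \<eta> * a"
      using w eta a0 by (intro mult_mono) auto
    have "w * (2 * a - w / 2 - 2 * (1 + t)) = w * (4 * a - w) / 2 - 2 * (1 + t) * w"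
      by (simp add: algebra_simps)
    moreover have "2 * (1 + t) * w \<le> 6 * a * (1 + t)"
    proof -
      have "2 * (1 + t) * w \<le> 2 * (1 + t) * (3 * a)" using w t1 by (intro mult_left_mono) auto
      moreover have "2 * (1 + t) * (3 * a) = 6 * a * (1 + t)" by (simp add: algebra_simps)
      ultimately show ?thesis by linarith
    qed
    moreover have "(1 + t) * (6 * a + B) = 6 * a * (1 + t) + (1 + t) * B" by (simp add: algebra_simps)
    ultimately have Gl: "G c t (U t) \<ge> \<eta> * a / 4"
      using Ge p1 sB[OF t0 t(2)] sle[OF t0 t(2)] by linarith
    have pos: "1 - t\<^sup>2 > 0" using t1 by (simp add: abs_square_less_1)
    have den: "1 - t\<^sup>2 \<le> 2 * (1 + t)"
    proof -
      have "2 * (1 + t) - (1 - t\<^sup>2) = (1 + t)\<^sup>2" by (simp add: power2_eq_square algebra_simps)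
      moreover have "(1 + t)\<^sup>2 \<ge> 0" by simp
      ultimately show ?thesis by linarith
    qed
    have "\<kappa> * (1 / (1 + t)) = (\<eta> * a / 4) / (2 * (1 + t))" unfolding \<kappa>_def using t1 by simp
    also have "\<dots> \<le> (\<eta> * a / 4) / (1 - t\<^sup>2)" using pos den eta a0 by (intro divide_left_mono) auto
    also have "\<dots> \<le> G c t (U t) / (1 - t\<^sup>2)" using Gl pos by (intro divide_right_mono) auto
    finally show "\<exists>y. (psi has_real_derivative y) (at t) \<and> 0 \<le> y" using der by force
  qed
  moreover have "ln (1 + x) = ln s1 - q"
    unfolding x_def using s1 by (simp add: ln_mult)
  ultimately have "U x \<le> U x1 - \<kappa> * q"
    unfolding psi_def x1_def using kap by (simp add: algebra_simps)
  hence "U x \<le> U x1 - (3 * a + 1)" using q by simp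
  moreover have "U x - (2 - 2 * a) > \<eta>" using gt'[of "1 + x"] x unfolding x1_def by simp
  ultimately show False using lt unfolding x1_def using eta by linarith
qed

lemma reach_low:
  fixes a \<eta> s' :: real
  assumes sol: "is_sol c U" and a: "a = sqrt (1 + cc1 c)" "cc1 c > -1"
    and gneq: "U 0 \<noteq> gamma_plus c" and eta: "\<eta> > 0" and s': "s' > 0"
  shows "\<exists>s. 0 < s \<and> s \<le> s' \<and> U (-1 + s) - (2 - 2 * a) \<le> \<eta>"
proof (rule ccontr)
  assume "\<not> ?thesis"
  hence H: "\<And>s. 0 < s \<Longrightarrow> s \<le> s' \<Longrightarrow> U (-1 + s) - (2 - 2 * a) > \<eta>" by force
  have a0: "a > 0" unfolding a(1) using a(2) by simp
  define \<eta>' where "\<eta>' = min \<eta> a"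
  have eta': "0 < \<eta>'" "\<eta>' \<le> a" "\<eta>' \<le> \<eta>" unfolding \<eta>'_def using eta a0 by auto
  define B where "B = \<bar>cc2 c\<bar> + \<bar>cc1 c\<bar> + 2 * \<bar>cc3 c\<bar> + 4 + 4 * a"
  have B0: "B \<ge> 0" unfolding B_def using a0 by simp
  have den0: "6 * a + B > 0" using a0 B0 by simp
  define s2 where "s2 = min s' (min (1/2) (\<eta>' * a / 4 / (6 * a + B)))"
  have s2: "0 < s2" "s2 \<le> s'" "s2 \<le> 1/2" "s2 * (6 * a + B) \<le> \<eta>' * a / 4"
  proof -
    show "0 < s2" unfolding s2_def using s' eta' a0 den0 by simp
    show "s2 \<le> s'" unfolding s2_def by auto
    show "s2 \<le> 1/2" unfolding s2_def
      using min.cobounded2[of s' "min (1/2) (\<eta>' * a / 4 / (6 * a + B))"] min.cobounded1[of "1/2" "\<eta>' * a / 4 / (6 * a + B)"] by linarith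
    have "s2 \<le> \<eta>' * a / 4 / (6 * a + B)" unfolding s2_def by auto
    thus "s2 * (6 * a + B) \<le> \<eta>' * a / 4" using den0 by (simp add: pos_le_divide_eq algebra_simps)
  qed
  show False
  proof (cases "\<exists>s1. 0 < s1 \<and> s1 \<le> s2 \<and> U (-1 + s1) - (2 - 2 * a) < 3 * a")
    case True
    then obtain s1 where s1: "0 < s1" "s1 \<le> s2" "U (-1 + s1) - (2 - 2 * a) < 3 * a" by blast
    have "s1 * (6 * a + B) \<le> s2 * (6 * a + B)" using s1 den0 by (intro mult_right_mono) auto
    show False
    proof (rule climb_case[OF sol a eta'(1,2) _ s1(1) _ _ s1(3)])
      show "\<bar>cc2 c\<bar> + \<bar>cc1 c\<bar> + 2 * \<bar>cc3 c\<bar> + 4 + 4 * a \<le> B" unfolding B_def by simp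
      show "s1 \<le> 1/2" using s1 s2 by simp
      show "s1 * (6 * a + B) \<le> \<eta>' * a / 4" using \<open>s1 * (6 * a + B) \<le> s2 * (6 * a + B)\<close> s2 by linarith
      fix s assume "0 < s" "s \<le> s1"
      thus "U (-1 + s) - (2 - 2 * a) > \<eta>'" using H[of s] s1 s2 eta' by auto
    qed
  next
    case False
    hence big: "\<And>s. 0 < s \<Longrightarrow> s \<le> s2 \<Longrightarrow> U (-1 + s) - (2 - 2 * a) \<ge> 3 * a" by force
    have mx: "\<forall>Y. is_sol c Y \<longrightarrow> (\<forall>x. -1 < x \<and> x < 1 \<longrightarrow> Y x \<le> U x)"
    proof (intro allI impI, rule ccontr)
      fix Y x assume solY: "is_sol c Y" and "-1 < x \<and> x < 1" and "\<not> Y x \<le> U x"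
      hence x: "-1 < x" "x < 1" "Y x > U x" by auto
      show False
        by (rule blowup_case[OF sol solY a0 s2(1) _ big]) (use s2 sol_order[OF sol solY x] in auto)
    qed
    have "gamma_plus c = U 0" by (rule maximal_gamma[OF sol mx])
    thus False using gneq by simp
  qed
qed



lemma has_real_derivative_sequence:
  fixes S :: "real set"
  assumes cvs: "convex S"
      and df:  "\<And>n x. x \<in> S \<Longrightarrow> (f n has_field_derivative f' n x) (at x within S)"
      and conv: "\<And>e. 0 < e \<Longrightarrow> \<exists>N. \<forall>n x. n \<ge> N \<longrightarrow> x \<in> S \<longrightarrow> \<bar>f' n x - g' x\<bar> \<le> e"
      and "\<exists>x l. x \<in> S \<and> ((\<lambda>n. f n x) \<longlongrightarrow> l) sequentially"
    shows "\<exists>g. \<forall>x \<in> S. ((\<lambda>n. f n x) \<longlongrightarrow> g x) sequentially \<and>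
                       (g has_field_derivative (g' x)) (at x within S)"
proof -
  from assms obtain x l where x: "x \<in> S" and tf: "((\<lambda>n. f n x) \<longlongrightarrow> l) sequentially"
    by blast
  show ?thesis
    unfolding has_field_derivative_def
  proof (rule has_derivative_sequence [OF cvs _ _ x])
    show "(\<lambda>n. f n x) \<longlonglongrightarrow> l"
      by (rule tf)
  next
    have **: "\<exists>N. \<forall>n\<ge>N. \<forall>x\<in>S. \<forall>h. \<bar>f' n x * h - g' x * h\<bar> \<le> \<epsilon> * \<bar>h\<bar>"
      if eps: "\<epsilon> > 0" for \<epsilon>::real
    proof -
      obtain N where N: "\<forall>n x. n \<ge> N \<longrightarrow> x \<in> S \<longrightarrow> \<bar>f' n x - g' x\<bar> \<le> \<epsilon>" using conv[OF eps] by blast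
      show ?thesis
      proof (intro exI allI impI ballI)
        fix n x h assume "n \<ge> N" "x \<in> S"
        hence "\<bar>f' n x - g' x\<bar> \<le> \<epsilon>" using N by blast
        hence "\<bar>f' n x - g' x\<bar> * \<bar>h\<bar> \<le> \<epsilon> * \<bar>h\<bar>" by (simp add: mult_right_mono)
        thus "\<bar>f' n x * h - g' x * h\<bar> \<le> \<epsilon> * \<bar>h\<bar>" by (simp add: left_diff_distrib[symmetric] abs_mult)
      qed
    qed
    show "\<And>e. e > 0 \<Longrightarrow> \<forall>\<^sub>F n in sequentially. \<forall>x\<in>S. \<forall>h. norm (f' n x * h - g' x * h) \<le> e * norm h"
      unfolding eventually_sequentially real_norm_def by (blast intro: **)
  qed (metis has_field_derivative_def df)
qed

lemma G_lip:
  assumes t: "-1 < t" "t < 1" and u: "\<bar>u\<bar> \<le> R" "\<bar>u'\<bar> \<le> R"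
  shows "\<bar>G c t u - G c' t u'\<bar> \<le> 5 * norm (c - c') + (2 + R) * \<bar>u - u'\<bar>"
proof -
  have u4: "u \<le> R" "- u \<le> R" "u' \<le> R" "- u' \<le> R" using u by (auto simp: abs_le_iff)
  have h: "\<bar>2 * t + (u + u') / 2\<bar> \<le> 2 + R" unfolding abs_le_iff using u4 t by (simp add: field_simps)
  have P: "\<bar>Pc (c - c') t\<bar> \<le> 5 * norm (c - c')" using Pc_bound[OF t, of "c - c'"] Pm_norm[of "c - c'"] by linarith
  have "\<bar>(u - u') * (2 * t + (u + u') / 2)\<bar> \<le> \<bar>u - u'\<bar> * (2 + R)"
    unfolding abs_mult by (rule mult_left_mono[OF h]) simp
  thus ?thesis unfolding G_diff using P by (simp add: algebra_simps)
qed

lemma exp_bound_le: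
  fixes L x :: real
  assumes "L \<ge> 0" "\<bar>x\<bar> \<le> 1"
  shows "exp (L * \<bar>x\<bar>) \<le> exp L"
proof -
  have "L * \<bar>x\<bar> \<le> L * 1" using assms by (intro mult_left_mono) auto
  thus ?thesis by simp
qed



lemma limit_sol:
  fixes cs :: "nat \<Rightarrow> param" and Us :: "nat \<Rightarrow> real \<Rightarrow> real"
  assumes sols: "\<And>n. is_sol (cs n) (Us n)" and cs: "cs \<longlonglongrightarrow> c0" and gs: "(\<lambda>n. Us n 0) \<longlonglongrightarrow> g0"
    and R: "\<And>n. Rb (cs n) \<le> R"
  shows "\<exists>U0. is_sol c0 U0 \<and> U0 0 = g0"
proof -
  define d where "d n = \<bar>Us n 0 - g0\<bar> + norm (cs n - c0)" for n
  have d0: "d \<longlonglongrightarrow> 0"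
  proof -
    have "(\<lambda>n. Us n 0 - g0) \<longlonglongrightarrow> 0" using gs by (rule LIM_zero)
    hence a: "(\<lambda>n. \<bar>Us n 0 - g0\<bar>) \<longlonglongrightarrow> 0" by (rule tendsto_rabs_zero)
    have "(\<lambda>n. cs n - c0) \<longlonglongrightarrow> 0" using cs by (rule LIM_zero)
    hence b: "(\<lambda>n. norm (cs n - c0)) \<longlonglongrightarrow> 0" by (rule tendsto_norm_zero)
    show ?thesis unfolding d_def using tendsto_add_zero[OF a b] .
  qed
  have dnn: "d n \<ge> 0" for n unfolding d_def by simp
  have R9: "R \<ge> 9" using R[of 0] unfolding Rb_def Pm_def by simp
  define Kf where "Kf \<sigma> = (1 + 5 / \<sigma>) * exp ((2 + R) / \<sigma> + 1)" for \<sigma> :: real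
  have Kfpos: "Kf \<sigma> > 0" if "\<sigma> > 0" for \<sigma> unfolding Kf_def using that by (simp add: add_pos_nonneg)
  have key: "\<bar>Us n x - Us m x\<bar> \<le> Kf \<sigma> * (d n + d m)"
    if s: "0 < \<sigma>" "\<sigma> \<le> 1" "-1 + \<sigma> \<le> x" "x \<le> 1 - \<sigma>" for n m x \<sigma>
  proof -
    have A: "\<bar>Us n x - Us m x\<bar> \<le> (\<bar>Us n 0 - Us m 0\<bar> + 5 * norm (cs n - cs m) / \<sigma>) * exp (((2 + R) / \<sigma> + 1) * \<bar>x - 0\<bar>)"
      by (rule sol_diff_gen[OF sols sols s(1,2)]) (use s R in auto)
    have e: "exp (((2 + R) / \<sigma> + 1) * \<bar>x - 0\<bar>) \<le> exp ((2 + R) / \<sigma> + 1)"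
      using s R9 by (intro exp_bound_le) (auto simp: abs_le_iff)
    have g: "\<bar>Us n 0 - Us m 0\<bar> \<le> d n + d m"
    proof -
      have tri: "\<bar>Us n 0 - Us m 0\<bar> \<le> \<bar>Us n 0 - g0\<bar> + \<bar>Us m 0 - g0\<bar>"
        using abs_triangle_ineq4[of "Us n 0 - g0" "Us m 0 - g0"] by simp
      have n1: "norm (cs n - c0) \<ge> 0" "norm (cs m - c0) \<ge> 0" by auto
      show ?thesis unfolding d_def using tri n1 by linarith
    qed
    have c: "norm (cs n - cs m) \<le> d n + d m"
    proof -
      have "norm (cs n - cs m) \<le> norm (cs n - c0) + norm (cs m - c0)"
        using norm_triangle_ineq4[of "cs n - c0" "cs m - c0"] by simp
      thus ?thesis unfolding d_def by simp
    qed
    have "5 * norm (cs n - cs m) / \<sigma> \<le> 5 * (d n + d m) / \<sigma>" using c s by (simp add: divide_right_mono)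
    hence "\<bar>Us n 0 - Us m 0\<bar> + 5 * norm (cs n - cs m) / \<sigma> \<le> (1 + 5 / \<sigma>) * (d n + d m)"
      using g by (simp add: algebra_simps)
    hence "(\<bar>Us n 0 - Us m 0\<bar> + 5 * norm (cs n - cs m) / \<sigma>) * exp (((2 + R) / \<sigma> + 1) * \<bar>x - 0\<bar>)
        \<le> (1 + 5 / \<sigma>) * (d n + d m) * exp ((2 + R) / \<sigma> + 1)"
      using e dnn[of n] dnn[of m] s by (intro mult_mono) auto
    thus ?thesis using A unfolding Kf_def by (simp add: algebra_simps)
  qed
  have cauchy: "Cauchy (\<lambda>n. Us n x)" if x: "-1 < x" "x < 1" for x
  proof (rule CauchyI)
    fix e :: real assume e: "e > 0"
    define \<sigma> where "\<sigma> = 1 - \<bar>x\<bar>"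
    have s: "0 < \<sigma>" "\<sigma> \<le> 1" "-1 + \<sigma> \<le> x" "x \<le> 1 - \<sigma>" unfolding \<sigma>_def using x by auto
    have "e / (2 * Kf \<sigma>) > 0" using e Kfpos[OF s(1)] by simp
    then obtain M where M: "\<And>n. n \<ge> M \<Longrightarrow> d n < e / (2 * Kf \<sigma>)"
      using d0 dnn unfolding LIMSEQ_def by (metis dist_real_def diff_zero abs_of_nonneg)
    show "\<exists>M. \<forall>m\<ge>M. \<forall>n\<ge>M. norm (Us m x - Us n x) < e"
    proof (intro exI allI impI)
      fix m n assume "M \<le> m" "M \<le> n"
      hence "d m + d n < e / Kf \<sigma>" using M[of m] M[of n] by (simp add: field_simps)
      hence "Kf \<sigma> * (d m + d n) < e" using Kfpos[OF s(1)] by (simp add: field_simps)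
      thus "norm (Us m x - Us n x) < e" using key[OF s, of m n] by simp
    qed
  qed
  define U0 where "U0 x = lim (\<lambda>n. Us n x)" for x
  have lim: "(\<lambda>n. Us n x) \<longlonglongrightarrow> U0 x" if "-1 < x" "x < 1" for x
    unfolding U0_def using cauchy[OF that] by (simp add: Cauchy_convergent_iff convergent_LIMSEQ_iff)
  have unif: "\<bar>Us n x - U0 x\<bar> \<le> Kf \<sigma> * d n"
    if s: "0 < \<sigma>" "\<sigma> \<le> 1" "-1 + \<sigma> \<le> x" "x \<le> 1 - \<sigma>" for n x \<sigma>
  proof -
    have x: "-1 < x" "x < 1" using s by auto
    have l1: "(\<lambda>m. \<bar>Us n x - Us m x\<bar>) \<longlonglongrightarrow> \<bar>Us n x - U0 x\<bar>"
      by (intro tendsto_intros lim x)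
    have l2: "(\<lambda>m. Kf \<sigma> * (d n + d m)) \<longlonglongrightarrow> Kf \<sigma> * (d n + 0)"
      by (intro tendsto_intros d0)
    show ?thesis using tendsto_le[OF trivial_limit_sequentially l2 l1] key[OF s] by simp
  qed
  have bnd: "\<bar>U0 x\<bar> \<le> R" if x: "-1 < x" "x < 1" for x
  proof -
    have l1: "(\<lambda>m. \<bar>Us m x\<bar>) \<longlonglongrightarrow> \<bar>U0 x\<bar>" by (intro tendsto_intros lim x)
    have "\<bar>Us m x\<bar> \<le> R" for m using apriori[OF sols x, of m] R[of m] by simp
    thus ?thesis using tendsto_le[OF trivial_limit_sequentially tendsto_const l1] by simp
  qed
  have der: "(U0 has_real_derivative G c0 x (U0 x) / (1 - x\<^sup>2)) (at x)" if x: "-1 < x" "x < 1" for x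
  proof -
    define \<sigma> where "\<sigma> = (1 - \<bar>x\<bar>) / 2"
    have s: "0 < \<sigma>" "\<sigma> \<le> 1" "-1 + \<sigma> < x" "x < 1 - \<sigma>" unfolding \<sigma>_def using x by (auto simp: abs_if field_simps)
    define S where "S = {-1 + \<sigma> .. 1 - \<sigma>}"
    have inS: "-1 < t \<and> t < 1" if "t \<in> S" for t using that s unfolding S_def by auto
    have "\<exists>g. \<forall>t \<in> S. ((\<lambda>n. Us n t) \<longlonglongrightarrow> g t) \<and>
           (g has_field_derivative (G c0 t (U0 t) / (1 - t\<^sup>2))) (at t within S)"
    proof (rule has_real_derivative_sequence[where f' = "\<lambda>n t. G (cs n) t (Us n t) / (1 - t\<^sup>2)"])
      show "convex S" unfolding S_def by simp
      fix n t assume "t \<in> S"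
      thus "(Us n has_field_derivative G (cs n) t (Us n t) / (1 - t\<^sup>2)) (at t within S)"
        using sol_der[OF sols] inS by (blast intro: has_field_derivative_at_within)
    next
      fix e :: real assume e: "e > 0"
      define K2 where "K2 = (5 + (2 + R) * Kf \<sigma>) / \<sigma>"
      have K2: "K2 > 0" unfolding K2_def using s R9 Kfpos[OF s(1)] by (simp add: add_pos_nonneg)
      have "e / K2 > 0" using e K2 by simp
      then obtain N where N: "\<And>n. n \<ge> N \<Longrightarrow> d n < e / K2"
        using d0 dnn unfolding LIMSEQ_def by (metis dist_real_def diff_zero abs_of_nonneg)
      show "\<exists>N. \<forall>n t. n \<ge> N \<longrightarrow> t \<in> S \<longrightarrow> \<bar>G (cs n) t (Us n t) / (1 - t\<^sup>2) - G c0 t (U0 t) / (1 - t\<^sup>2)\<bar> \<le> e"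
      proof (intro exI allI impI)
        fix n t assume n: "N \<le> n" and t: "t \<in> S"
        have t1: "-1 < t" "t < 1" using inS[OF t] by auto
        have ts: "-1 + \<sigma> \<le> t" "t \<le> 1 - \<sigma>" using t unfolding S_def by auto
        have pos: "1 - t\<^sup>2 \<ge> \<sigma>" by (rule one_minus_sq) (use s ts in auto)
        have bU: "\<bar>Us n t\<bar> \<le> R" using apriori[OF sols t1, of n] R[of n] by simp
        have gl: "\<bar>G (cs n) t (Us n t) - G c0 t (U0 t)\<bar> \<le> 5 * norm (cs n - c0) + (2 + R) * \<bar>Us n t - U0 t\<bar>"
          by (rule G_lip[OF t1 bU bnd[OF t1]])
        have "norm (cs n - c0) \<le> d n" unfolding d_def by simp
        moreover have "(2 + R) * \<bar>Us n t - U0 t\<bar> \<le> (2 + R) * (Kf \<sigma> * d n)"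
          using unif[OF s(1,2) ts, of n] R9 by (intro mult_left_mono) auto
        ultimately have gl2: "\<bar>G (cs n) t (Us n t) - G c0 t (U0 t)\<bar> \<le> (5 + (2 + R) * Kf \<sigma>) * d n"
          using gl by (simp add: algebra_simps)
        have "\<bar>G (cs n) t (Us n t) / (1 - t\<^sup>2) - G c0 t (U0 t) / (1 - t\<^sup>2)\<bar>
            = \<bar>G (cs n) t (Us n t) - G c0 t (U0 t)\<bar> / (1 - t\<^sup>2)"
          using pos s by (simp add: diff_divide_distrib[symmetric])
        also have "\<dots> \<le> (5 + (2 + R) * Kf \<sigma>) * d n / \<sigma>"
          using gl2 pos s by (intro frac_le) (auto simp: dnn)
        also have "\<dots> = K2 * d n" unfolding K2_def by simp
        also have "\<dots> \<le> K2 * (e / K2)" using N[OF n] K2 by (intro mult_left_mono) auto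
        also have "\<dots> = e" using K2 by simp
        finally show "\<bar>G (cs n) t (Us n t) / (1 - t\<^sup>2) - G c0 t (U0 t) / (1 - t\<^sup>2)\<bar> \<le> e" .
      qed
    next
      show "\<exists>x l. x \<in> S \<and> (\<lambda>n. Us n x) \<longlonglongrightarrow> l"
        using gs s unfolding S_def by (intro exI[of _ 0] exI[of _ g0]) auto
    qed
    then obtain g where g: "\<And>t. t \<in> S \<Longrightarrow> (\<lambda>n. Us n t) \<longlonglongrightarrow> g t"
        "\<And>t. t \<in> S \<Longrightarrow> (g has_field_derivative (G c0 t (U0 t) / (1 - t\<^sup>2))) (at t within S)"
      by blast
    have xS: "x \<in> S" "x \<in> interior S" using s unfolding S_def by auto
    have gx: "(g has_field_derivative (G c0 x (U0 x) / (1 - x\<^sup>2))) (at x)"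
      using g(2)[OF xS(1)] at_within_interior[OF xS(2)] by simp
    show ?thesis
    proof (rule has_field_derivative_transform_within_open[OF gx, of "{-1 + \<sigma> <..< 1 - \<sigma>}"])
      show "open {-1 + \<sigma> <..< 1 - \<sigma>}" by simp
      show "x \<in> {-1 + \<sigma> <..< 1 - \<sigma>}" using s by simp
      fix t assume t: "t \<in> {-1 + \<sigma> <..< 1 - \<sigma>}"
      hence tS: "t \<in> S" unfolding S_def by auto
      show "g t = U0 t" using LIMSEQ_unique[OF g(1)[OF tS] lim] inS[OF tS] by simp
    qed
  qed
  have "is_sol c0 U0"
    unfolding is_sol_def
  proof (intro allI impI conjI)
    fix x :: real assume "-1 < x \<and> x < 1"
    hence x: "-1 < x" "x < 1" by auto
    have dx: "deriv U0 x = G c0 x (U0 x) / (1 - x\<^sup>2)" by (rule DERIV_imp_deriv[OF der[OF x]])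
    show "U0 differentiable (at x)" using der[OF x] by (metis DERIV_deriv_iff_real_differentiable dx)
    have pos: "1 - x\<^sup>2 > 0" using x by (simp add: abs_square_less_1)
    show "(1 - x\<^sup>2) * deriv U0 x + 2 * x * U0 x + (1/2) * (U0 x)\<^sup>2 = Pc c0 x"
      unfolding dx G_def using pos by simp
  qed
  moreover have "U0 0 = g0" using LIMSEQ_unique[OF lim gs] by simp
  ultimately show ?thesis by blast
qed



lemma powr_to0_right: "\<mu> > 0 \<Longrightarrow> ((\<lambda>x::real. (1 + x) powr \<mu>) \<longlongrightarrow> 0) (at_right (-1))"
proof -
  assume mu: "\<mu> > 0"
  have l: "((\<lambda>x::real. 1 + x) \<longlongrightarrow> 0) (at_right (-1))"
  proof -
    have "((\<lambda>x::real. 1 + x) \<longlongrightarrow> 1 + (-1)) (at_right (-1))" by (intro tendsto_intros)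
    thus ?thesis by simp
  qed
  have ev: "\<forall>\<^sub>F x in at_right (-1). 0 \<le> 1 + (x::real)"
    using eventually_at_right_real[of "-1" 0] by (rule eventually_mono) auto
  show ?thesis by (rule tendsto_zero_powrI[OF l tendsto_const ev mu])
qed

lemma point_est:
  fixes M \<epsilon> \<epsilon>1 \<mu>0 smax s0 :: real
  assumes sol: "is_sol c U" and c1: "cc1 c > -1"
    and cb: "\<bar>cc1 c\<bar> \<le> M" "\<bar>cc2 c\<bar> \<le> M" "\<bar>cc3 c\<bar> \<le> M"
    and e: "0 < \<epsilon>1" "\<epsilon>1 \<le> \<epsilon>" "\<epsilon>1 \<le> 1/2"
    and mu: "min (sqrt (1 + cc1 c)) 1 - \<epsilon>1 \<ge> \<mu>0" "\<mu>0 > 0"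
    and smax: "smax \<le> \<epsilon>1 / 4" "smax \<le> 1/2" "smax powr \<mu>0 \<le> \<epsilon>1\<^sup>2 / (2 * (8 * M + 8 + 1))"
    and s0: "0 < s0" "s0 \<le> smax"
    and start: "U (-1 + s0) - (2 - 2 * sqrt (1 + cc1 c)) \<le> \<epsilon>1"
  shows "\<forall>x. -1 < x \<and> x < -1 + s0 \<longrightarrow>
     \<bar>U x - Lim (at_right (-1)) U\<bar> \<le> ((9 + 5 * M + 2 + (8 * M + 8 + 1) / \<epsilon>1) / s0) * (1 + x) powr (min (sqrt (1 + cc1 c)) 1 - \<epsilon>)"
proof -
  define a where "a = sqrt (1 + cc1 c)"
  define R where "R = 9 + 5 * M"
  define B where "B = 8 * M + 8"
  define \<mu> where "\<mu> = min a 1 - \<epsilon>1"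
  have M0: "M \<ge> 0" using cb by linarith
  have a0: "a \<ge> 0" unfolding a_def by (rule real_sqrt_ge_zero) (use c1 in linarith)
  have a2: "a\<^sup>2 = 1 + cc1 c" unfolding a_def by (rule real_sqrt_pow2) (use c1 in linarith)
  have aM: "a \<le> 1 + M"
  proof (rule power2_le_imp_le)
    show "a\<^sup>2 \<le> (1 + M)\<^sup>2"
    proof -
      have "cc1 c \<le> M" using cb(1) by (simp add: abs_le_iff)
      moreover have "M * M \<ge> 0" using M0 by simp
      moreover have "(1 + M)\<^sup>2 = 1 + M * 2 + M * M" by (simp add: power2_eq_square algebra_simps)
      ultimately show ?thesis unfolding a2 using M0 by linarith
    qed
    show "0 \<le> 1 + M" using M0 by simp
  qed
  have Bc: "\<bar>cc2 c\<bar> + \<bar>cc1 c\<bar> + 2 * \<bar>cc3 c\<bar> + 4 + 4 * a \<le> B" unfolding B_def using cb aM by linarith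
  have B0: "B \<ge> 0" unfolding B_def using M0 by simp
  have Rc: "Rb c \<le> R" unfolding R_def Rb_def Pm_def using cb by linarith
  have mu0: "\<mu> \<ge> \<mu>0" "\<mu> > 0" using mu unfolding \<mu>_def a_def by auto
  have mu1: "\<mu> \<le> 1" "a - \<mu> \<ge> \<epsilon>1" unfolding \<mu>_def using e by auto
  have s01: "s0 \<le> 1" "2 * s0 \<le> \<epsilon>1 / 2" using s0 smax by auto
  have sp: "s0 powr \<mu> > 0" using s0 by simp
  define \<theta> where "\<theta> = \<epsilon>1\<^sup>2 / (2 * (B + 1))"
  have th: "\<theta> > 0" unfolding \<theta>_def using e B0 by simp
  have spth: "s0 powr \<mu> \<le> \<theta>"
  proof -
    have "s0 powr \<mu> \<le> s0 powr \<mu>0" using mu0 s0 s01 by (intro powr_mono') auto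
    also have "\<dots> \<le> smax powr \<mu>0" using s0 mu by (intro powr_mono2) auto
    also have "\<dots> \<le> \<theta>" using smax unfolding \<theta>_def B_def by simp
    finally show ?thesis .
  qed
  have sp1: "s0 powr \<mu> \<le> 1" using s0 s01 mu0 by (intro powr_le1) auto
  define A where "A = \<epsilon>1 / s0 powr \<mu>"
  have AA: "A * \<epsilon>1 > B"
  proof -
    have tp: "0 < \<theta> * s0 powr \<mu>" using th sp by simp
    have "2 * (B + 1) = \<epsilon>1\<^sup>2 / \<theta>" unfolding \<theta>_def using e B0 by (simp add: field_simps)
    also have "\<dots> \<le> \<epsilon>1\<^sup>2 / s0 powr \<mu>" using spth tp by (intro divide_left_mono) auto
    also have "\<dots> = A * \<epsilon>1" unfolding A_def by (simp add: power2_eq_square)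
    finally have "2 * (B + 1) \<le> A * \<epsilon>1" .
    moreover have "2 * (B + 1) = 2 * B + 2" by simp
    ultimately show ?thesis using B0 by linarith
  qed
  have As: "A * s0 powr \<mu> = \<epsilon>1" unfolding A_def using sp by simp
  have up: "U x - (2 - 2 * a) \<le> A * (1 + x) powr \<mu>" if x: "-1 < x" "x \<le> -1 + s0" for x
    by (rule trap_upper[OF sol a_def c1 e(1) _ mu1(1) mu1(2) s0(1) s01(2) s01(1) Bc AA _ _ x])
       (use mu0 As start in \<open>auto simp: a_def\<close>)
  define N where "N = R + 2 + (B + 1) / \<epsilon>1"
  define A' where "A' = N / s0 powr \<mu>"
  have q: "(B + 1) / \<epsilon>1 > 0" using e B0 by simp
  have R9: "R \<ge> 9" unfolding R_def using M0 by simp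
  have N: "N > 0" "N \<ge> R + 2" unfolding N_def using q R9 by linarith+
  have "N * \<epsilon>1 = (R + 2) * \<epsilon>1 + (B + 1)" unfolding N_def using e by (simp add: field_simps)
  moreover have "(R + 2) * \<epsilon>1 \<ge> 0" using R9 e by simp
  ultimately have N3: "N * \<epsilon>1 \<ge> B + 1" by linarith
  have AA': "A' * \<epsilon>1 > B"
  proof -
    have "N \<le> A'" unfolding A'_def using sp sp1 N by (simp add: le_divide_eq mult_left_le)
    hence "N * \<epsilon>1 \<le> A' * \<epsilon>1" using e by (simp add: mult_right_mono)
    thus ?thesis using N3 by linarith
  qed
  have As': "A' * s0 powr \<mu> = N" unfolding A'_def using sp by simp
  have x0: "-1 < -1 + s0" "-1 + s0 < 1" using s0 s01 by auto
  have st': "U (-1 + s0) - (2 - 2 * a) \<ge> - A' * s0 powr \<mu>"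
  proof -
    have "\<bar>U (-1 + s0)\<bar> < Rb c" by (rule apriori[OF sol x0])
    hence "U (-1 + s0) > - R" using Rc by (simp add: abs_less_iff)
    thus ?thesis using As' N a0 by simp
  qed
  have low: "U x - (2 - 2 * a) \<ge> - A' * (1 + x) powr \<mu>" if x: "-1 < x" "x \<le> -1 + s0" for x
    by (rule trap_lower[OF sol a_def c1 e(1) _ mu1(1) mu1(2) s0(1) s01(2) s01(1) Bc AA' st' x])
       (use mu0 in auto)
  have AleA': "A \<le> A'" unfolding A_def A'_def using sp e N R9 by (intro divide_right_mono) auto
  have both: "\<bar>U x - (2 - 2 * a)\<bar> \<le> A' * (1 + x) powr \<mu>" if x: "-1 < x" "x \<le> -1 + s0" for x
  proof -
    have "A * (1 + x) powr \<mu> \<le> A' * (1 + x) powr \<mu>" using AleA' by (intro mult_right_mono) auto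
    thus ?thesis using up[OF x] low[OF x] by (simp add: abs_le_iff)
  qed
  have lim: "(U \<longlongrightarrow> 2 - 2 * a) (at_right (-1))"
  proof (rule tendsto_sandwich[where f = "\<lambda>x. (2 - 2 * a) - A' * (1 + x) powr \<mu>" and h = "\<lambda>x. (2 - 2 * a) + A' * (1 + x) powr \<mu>"])
    have ev0: "\<forall>\<^sub>F x in at_right (-1). x \<in> {-1<..<-1 + s0}"
      by (rule eventually_at_right_real) (use s0 in simp)
    have ev: "\<forall>\<^sub>F x in at_right (-1). -1 < x \<and> x \<le> -1 + s0"
      by (rule eventually_mono[OF ev0]) auto
    have bb: "(2 - 2 * a) - A' * (1 + x) powr \<mu> \<le> U x \<and> U x \<le> (2 - 2 * a) + A' * (1 + x) powr \<mu>"
      if "-1 < x \<and> x \<le> -1 + s0" for x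
    proof -
      have "\<bar>U x - (2 - 2 * a)\<bar> \<le> A' * (1 + x) powr \<mu>" using both that by auto
      thus ?thesis by (auto simp: abs_le_iff)
    qed
    show "\<forall>\<^sub>F x in at_right (-1). (2 - 2 * a) - A' * (1 + x) powr \<mu> \<le> U x"
      by (rule eventually_mono[OF ev]) (use bb in blast)
    show "\<forall>\<^sub>F x in at_right (-1). U x \<le> (2 - 2 * a) + A' * (1 + x) powr \<mu>"
      by (rule eventually_mono[OF ev]) (use bb in blast)
    have "((\<lambda>x. A' * (1 + x) powr \<mu>) \<longlongrightarrow> A' * 0) (at_right (-1))"
      by (intro tendsto_intros powr_to0_right mu0)
    hence z: "((\<lambda>x. A' * (1 + x) powr \<mu>) \<longlongrightarrow> 0) (at_right (-1))" by simp
    show "((\<lambda>x. (2 - 2 * a) - A' * (1 + x) powr \<mu>) \<longlongrightarrow> 2 - 2 * a) (at_right (-1))"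
      using tendsto_diff[OF tendsto_const z] by simp
    show "((\<lambda>x. (2 - 2 * a) + A' * (1 + x) powr \<mu>) \<longlongrightarrow> 2 - 2 * a) (at_right (-1))"
      using tendsto_add[OF tendsto_const z] by simp
  qed
  have L: "Lim (at_right (-1)) U = 2 - 2 * a" by (rule tendsto_Lim[OF _ lim]) simp
  show ?thesis
  proof (intro allI impI)
    fix x assume "-1 < x \<and> x < -1 + s0"
    hence x: "-1 < x" "x \<le> -1 + s0" "x < -1 + s0" by auto
    have x1: "0 < 1 + x" "1 + x \<le> 1" using x s01 by auto
    have "\<bar>U x - Lim (at_right (-1)) U\<bar> \<le> A' * (1 + x) powr \<mu>" unfolding L using both[OF x(1,2)] .
    also have "\<dots> \<le> A' * (1 + x) powr (min a 1 - \<epsilon>)"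
    proof -
      have "(1 + x) powr \<mu> \<le> (1 + x) powr (min a 1 - \<epsilon>)" unfolding \<mu>_def using x1 e by (intro powr_mono') auto
      moreover have "A' \<ge> 0" unfolding A'_def using N sp by simp
      ultimately show ?thesis by (intro mult_left_mono)
    qed
    also have "\<dots> \<le> (N / s0) * (1 + x) powr (min a 1 - \<epsilon>)"
    proof -
      have "s0 \<le> s0 powr \<mu>" using s0 s01 mu0 mu1 by (intro s_le_powr) auto
      hence "A' \<le> N / s0" unfolding A'_def using N s0 by (intro divide_left_mono) auto
      thus ?thesis by (intro mult_right_mono) auto
    qed
    finally show "\<bar>U x - Lim (at_right (-1)) U\<bar> \<le> ((9 + 5 * M + 2 + (8 * M + 8 + 1) / \<epsilon>1) / s0) * (1 + x) powr (min (sqrt (1 + cc1 c)) 1 - \<epsilon>)"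
      unfolding N_def R_def B_def a_def by simp
  qed
qed



lemma K_facts:
  assumes Ksub: "K \<subseteq> Iset - {(c, g). cc1 c = -1 \<or> g = gamma_plus c}"
    and M: "\<And>p. p \<in> K \<Longrightarrow> norm p \<le> M" and cg: "(c, g) \<in> K"
  shows "cc1 c > -1" "g \<noteq> gamma_plus c" "\<bar>cc1 c\<bar> \<le> M" "\<bar>cc2 c\<bar> \<le> M" "\<bar>cc3 c\<bar> \<le> M"
proof -
  have "(c, g) \<in> Iset" "\<not> (cc1 c = -1 \<or> g = gamma_plus c)" using Ksub cg by auto
  hence "cc1 c \<ge> -1" "cc1 c \<noteq> -1" "g \<noteq> gamma_plus c" unfolding Iset_def Jset_def by auto
  thus "cc1 c > -1" "g \<noteq> gamma_plus c" by auto
  have "norm c \<le> M" using M[OF cg] norm_fst_le[of c g] by linarith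
  thus "\<bar>cc1 c\<bar> \<le> M" "\<bar>cc2 c\<bar> \<le> M" "\<bar>cc3 c\<bar> \<le> M" using norm_cc[of c] by linarith+
qed

lemma Rb_le: "\<bar>cc1 c\<bar> \<le> M \<Longrightarrow> \<bar>cc2 c\<bar> \<le> M \<Longrightarrow> \<bar>cc3 c\<bar> \<le> M \<Longrightarrow> Rb c \<le> 9 + 5 * M"
  unfolding Rb_def Pm_def by linarith

lemma local_est:
  fixes K :: "(param \<times> real) set" and \<epsilon> M \<epsilon>1 \<mu>0 smax :: real
  assumes Ksub: "K \<subseteq> Iset - {(c, g). cc1 c = -1 \<or> g = gamma_plus c}"
    and M: "\<And>p. p \<in> K \<Longrightarrow> norm p \<le> M"
    and e: "0 < \<epsilon>1" "\<epsilon>1 \<le> \<epsilon>" "\<epsilon>1 \<le> 1/2"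
    and mu: "\<And>c g. (c, g) \<in> K \<Longrightarrow> min (sqrt (1 + cc1 c)) 1 - \<epsilon>1 \<ge> \<mu>0" "\<mu>0 > 0"
    and smax: "0 < smax" "smax \<le> \<epsilon>1 / 4" "smax \<le> 1/2" "smax powr \<mu>0 \<le> \<epsilon>1\<^sup>2 / (2 * (8 * M + 8 + 1))"
    and p0: "(c0, g0) \<in> K"
  shows "\<exists>r>0. \<exists>\<delta>>0. \<exists>C>0. \<forall>c g U. (c, g) \<in> K \<longrightarrow> dist (c, g) (c0, g0) < r \<longrightarrow> is_sol c U \<longrightarrow> U 0 = g \<longrightarrow>
           (\<forall>x. -1 < x \<and> x < -1 + \<delta> \<longrightarrow>
              \<bar>U x - Lim (at_right (-1)) U\<bar> \<le> C * (1 + x) powr (min (sqrt (1 + cc1 c)) 1 - \<epsilon>))"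
proof (cases "\<exists>r>0. \<forall>c g. (c, g) \<in> K \<longrightarrow> dist (c, g) (c0, g0) < r \<longrightarrow> \<not> (\<exists>U. is_sol c U \<and> U 0 = g)")
  case True
  then obtain r where r: "r > 0" "\<And>c g. (c, g) \<in> K \<Longrightarrow> dist (c, g) (c0, g0) < r \<Longrightarrow> \<not> (\<exists>U. is_sol c U \<and> U 0 = g)"
    by blast
  show ?thesis
    by (rule exI[of _ r], rule conjI[OF r(1)], rule exI[of _ 1], simp, rule exI[of _ 1], simp) (use r(2) in blast)
next
  case False
  define R where "R = 9 + 5 * M"
  have Bn: "\<forall>n. \<exists>t. (fst t, fst (snd t)) \<in> K \<and> dist (fst t, fst (snd t)) (c0, g0) < inverse (real (Suc n))
            \<and> is_sol (fst t) (snd (snd t)) \<and> snd (snd t) 0 = fst (snd t)"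
  proof
    fix n :: nat
    have "inverse (real (Suc n)) > 0" by simp
    then obtain c g U where "(c, g) \<in> K" "dist (c, g) (c0, g0) < inverse (real (Suc n))" "is_sol c U" "U 0 = g"
      using False by blast
    thus "\<exists>t. (fst t, fst (snd t)) \<in> K \<and> dist (fst t, fst (snd t)) (c0, g0) < inverse (real (Suc n))
            \<and> is_sol (fst t) (snd (snd t)) \<and> snd (snd t) 0 = fst (snd t)"
      by (intro exI[of _ "(c, g, U)"]) auto
  qed
  then obtain T where T: "\<And>n. (fst (T n), fst (snd (T n))) \<in> K"
      "\<And>n. dist (fst (T n), fst (snd (T n))) (c0, g0) < inverse (real (Suc n))"
      "\<And>n. is_sol (fst (T n)) (snd (snd (T n)))" "\<And>n. snd (snd (T n)) 0 = fst (snd (T n))"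
    by (metis choice)
  define cs where "cs n = fst (T n)" for n
  define gs where "gs n = fst (snd (T n))" for n
  define Us where "Us n = snd (snd (T n))" for n
  have conv: "(\<lambda>n. (cs n, gs n)) \<longlonglongrightarrow> (c0, g0)"
    unfolding lim_sequentially
  proof (intro allI impI)
    fix e :: real assume "e > 0"
    then obtain N where N: "inverse (real (Suc N)) < e" using reals_Archimedean by blast
    show "\<exists>N. \<forall>n\<ge>N. dist (cs n, gs n) (c0, g0) < e"
    proof (intro exI allI impI)
      fix n assume "N \<le> n"
      hence "inverse (real (Suc n)) \<le> inverse (real (Suc N))" by (simp add: le_imp_inverse_le)
      thus "dist (cs n, gs n) (c0, g0) < e" using T(2)[of n] N unfolding cs_def gs_def by linarith
    qed
  qed
  have csl: "cs \<longlonglongrightarrow> c0" using tendsto_fst[OF conv] by simp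
  have gsl: "(\<lambda>n. Us n 0) \<longlonglongrightarrow> g0" using tendsto_snd[OF conv] T(4) unfolding Us_def gs_def by simp
  have solsn: "is_sol (cs n) (Us n)" for n using T(3) unfolding cs_def Us_def by simp
  have Rn: "Rb (cs n) \<le> R" for n
    using K_facts[OF Ksub M T(1)[of n]] Rb_le unfolding R_def cs_def by blast
  obtain U0 where U0: "is_sol c0 U0" "U0 0 = g0" using limit_sol[OF solsn csl gsl Rn] by blast
  note f0 = K_facts[OF Ksub M p0]
  have R0: "Rb c0 \<le> R" using Rb_le f0 unfolding R_def by blast
  define a0 where "a0 = sqrt (1 + cc1 c0)"
  obtain s0 where s0: "0 < s0" "s0 \<le> smax" "U0 (-1 + s0) - (2 - 2 * a0) \<le> \<epsilon>1 / 2"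
    using reach_low[OF U0(1) a0_def f0(1), of "\<epsilon>1/2" smax] U0(2) f0(2) e smax by auto
  have s01: "s0 \<le> 1/2" using s0 smax by simp
  have "continuous (at c0) (\<lambda>c. sqrt (1 + cc1 c))" unfolding cc1_def by (intro continuous_intros)
  then obtain r1 where r1: "r1 > 0" "\<And>c. dist c c0 < r1 \<Longrightarrow> dist (sqrt (1 + cc1 c)) (sqrt (1 + cc1 c0)) < \<epsilon>1 / 8"
    unfolding continuous_at_eps_delta using e by (metis zero_less_divide_iff zero_less_numeral)
  define E where "E = exp ((2 + R) / s0 + 1)"
  have E: "E > 0" unfolding E_def by simp
  define F where "F = 1 + 5 / s0"
  have fpos: "F > 0" unfolding F_def using s0 by (simp add: add_pos_nonneg)
  define r2 where "r2 = \<epsilon>1 / (4 * F * E)"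
  have r2: "r2 > 0" unfolding r2_def using e E fpos by simp
  have r2e: "r2 * F * E = \<epsilon>1 / 4" unfolding r2_def using E fpos by (simp add: field_simps)
  define C where "C = (9 + 5 * M + 2 + (8 * M + 8 + 1) / \<epsilon>1) / s0"
  have M0: "M \<ge> 0" using f0 by linarith
  have C: "C > 0" unfolding C_def using M0 e s0 by (simp add: add_pos_nonneg)
  show ?thesis
  proof (rule exI[of _ "min r1 r2"], rule conjI[OF _ exI[of _ s0]], simp add: r1 r2,
         rule conjI[OF _ exI[of _ C]], simp add: s0, rule conjI[OF C], intro allI impI)
    fix c g U x
    assume cg: "(c, g) \<in> K" and d: "dist (c, g) (c0, g0) < min r1 r2" and solU: "is_sol c U" and U0g: "U 0 = g"
      and x: "-1 < x \<and> x < -1 + s0"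
    note fc = K_facts[OF Ksub M cg]
    have Rc: "Rb c \<le> R" using Rb_le fc unfolding R_def by blast
    have dc: "dist c c0 < min r1 r2" using dist_fst_le[of "(c, g)" "(c0, g0)"] d by simp
    have dg: "dist g g0 < min r1 r2" using dist_snd_le[of "(c, g)" "(c0, g0)"] d by simp
    have nc: "norm (c - c0) < r2" "\<bar>g - g0\<bar> < r2" using dc dg by (auto simp: dist_norm dist_real_def)
    have x0: "-1 + s0 \<le> 0" "0 \<le> 1 - s0" "-1 + s0 \<le> 1 - s0" using s01 by auto
    have gr: "\<bar>U (-1 + s0) - U0 (-1 + s0)\<bar> \<le> (\<bar>U 0 - U0 0\<bar> + 5 * norm (c - c0) / s0) * exp (((2 + R) / s0 + 1) * \<bar>(-1 + s0) - 0\<bar>)"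
      by (rule sol_diff_gen[OF solU U0(1)]) (use s0 s01 x0 Rc R0 in auto)
    have ex: "exp (((2 + R) / s0 + 1) * \<bar>(-1 + s0) - 0\<bar>) \<le> E"
      unfolding E_def using s0 s01 R_def M0 by (intro exp_bound_le) (auto simp: abs_le_iff)
    have pf: "\<bar>U 0 - U0 0\<bar> + 5 * norm (c - c0) / s0 \<le> r2 * F"
    proof -
      have "5 * norm (c - c0) / s0 \<le> 5 * r2 / s0" using nc s0 by (intro divide_right_mono) auto
      thus ?thesis using nc U0g U0(2) unfolding F_def by (simp add: algebra_simps)
    qed
    have "\<bar>U (-1 + s0) - U0 (-1 + s0)\<bar> \<le> r2 * F * E"
      using gr mult_mono[OF pf ex] r2 fpos by (simp add: mult_nonneg_nonneg) 
    hence gd: "\<bar>U (-1 + s0) - U0 (-1 + s0)\<bar> \<le> \<epsilon>1 / 4" using r2e by simp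
    have ad: "\<bar>sqrt (1 + cc1 c) - a0\<bar> < \<epsilon>1 / 8" using r1(2)[of c] dc unfolding a0_def dist_real_def by simp
    have start: "U (-1 + s0) - (2 - 2 * sqrt (1 + cc1 c)) \<le> \<epsilon>1"
    proof -
      have i2: "U (-1 + s0) - U0 (-1 + s0) \<le> \<epsilon>1 / 4" using abs_le_D1[OF gd] .
      have i3: "sqrt (1 + cc1 c) - a0 < \<epsilon>1 / 8" using le_less_trans[OF abs_ge_self ad] .
      show ?thesis using s0(3) i2 i3 by linarith
    qed
    have est: "\<forall>x. -1 < x \<and> x < -1 + s0 \<longrightarrow>
     \<bar>U x - Lim (at_right (-1)) U\<bar> \<le> ((9 + 5 * M + 2 + (8 * M + 8 + 1) / \<epsilon>1) / s0) * (1 + x) powr (min (sqrt (1 + cc1 c)) 1 - \<epsilon>)"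
      by (rule point_est[OF solU fc(1) fc(3,4,5) e mu(1)[OF cg] mu(2) smax(2,3,4) s0(1,2) start])
    show "\<bar>U x - Lim (at_right (-1)) U\<bar> \<le> C * (1 + x) powr (min (sqrt (1 + cc1 c)) 1 - \<epsilon>)"
      using est x unfolding C_def by blast
  qed
qed



theorem lemma2p12:
  fixes K :: "(param \<times> real) set" and \<epsilon> :: real
  assumes "compact K"
    and "K \<subseteq> Iset - {(c, g). cc1 c = -1 \<or> g = gamma_plus c}"
    and "\<epsilon> > 0"
  shows "\<exists>\<delta> > 0. \<exists>C > 0. \<forall>c g U. (c, g) \<in> K \<longrightarrow> is_sol c U \<longrightarrow> U 0 = g \<longrightarrow>
           (\<forall>x. -1 < x \<and> x < -1 + \<delta> \<longrightarrow>
              \<bar>U x - Lim (at_right (-1)) U\<bar>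
                \<le> C * (1 + x) powr (min (sqrt (1 + cc1 c)) 1 - \<epsilon>))"
proof (cases "K = {}")
  case True
  thus ?thesis by (intro exI[of _ 1] conjI) auto
next
  case False
  note cK = assms(1) and Ksub = assms(2) and eps = assms(3)
  obtain M where M: "\<And>p. p \<in> K \<Longrightarrow> norm p \<le> M"
    using compact_imp_bounded[OF cK] unfolding bounded_iff by blast
  obtain p1 where p1: "p1 \<in> K" using False by blast
  have M0: "M \<ge> 0" using M[OF p1] norm_ge_zero[of p1] by linarith
  define f where "f p = min (sqrt (1 + cc1 (fst p))) 1" for p :: "param \<times> real"
  have fc: "continuous_on K f" unfolding f_def cc1_def by (intro continuous_intros)
  obtain pm where pm: "pm \<in> K" "\<And>q. q \<in> K \<Longrightarrow> f pm \<le> f q"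
    using continuous_attains_inf[OF cK False fc] by blast
  define m0 where "m0 = f pm"
  have m0: "m0 > 0"
  proof -
    obtain c g where pmcg: "pm = (c, g)" by (cases pm)
    have "cc1 c > -1" using K_facts[OF Ksub M] pm(1) unfolding pmcg by blast
    thus ?thesis unfolding m0_def f_def pmcg by simp
  qed
  define \<epsilon>1 where "\<epsilon>1 = min \<epsilon> (min (m0 / 2) (1 / 2))"
  define \<mu>0 where "\<mu>0 = m0 / 2"
  have e: "0 < \<epsilon>1" "\<epsilon>1 \<le> \<epsilon>" "\<epsilon>1 \<le> 1/2" "\<epsilon>1 \<le> m0 / 2" unfolding \<epsilon>1_def using eps m0 by auto
  have mu: "min (sqrt (1 + cc1 c)) 1 - \<epsilon>1 \<ge> \<mu>0" if "(c, g) \<in> K" for c g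
  proof -
    have "f pm \<le> f (c, g)" using pm(2)[OF that] .
    hence "m0 \<le> min (sqrt (1 + cc1 c)) 1" unfolding m0_def f_def[of "(c, g)"] by simp
    thus ?thesis using e unfolding \<mu>0_def by linarith
  qed
  have mu0: "\<mu>0 > 0" unfolding \<mu>0_def using m0 by simp
  define \<theta> where "\<theta> = \<epsilon>1\<^sup>2 / (2 * (8 * M + 8 + 1))"
  have th: "\<theta> > 0" unfolding \<theta>_def using e M0 by simp
  define smax where "smax = min (\<epsilon>1 / 4) (min (1 / 2) (\<theta> powr (1 / \<mu>0)))"
  have smax: "0 < smax" "smax \<le> \<epsilon>1 / 4" "smax \<le> 1/2" "smax powr \<mu>0 \<le> \<epsilon>1\<^sup>2 / (2 * (8 * M + 8 + 1))"
  proof -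
    show "0 < smax" unfolding smax_def using e th by simp
    show "smax \<le> \<epsilon>1 / 4" unfolding smax_def by simp
    show "smax \<le> 1/2" unfolding smax_def by simp
    have "smax \<le> \<theta> powr (1 / \<mu>0)" unfolding smax_def by simp
    hence "smax powr \<mu>0 \<le> (\<theta> powr (1 / \<mu>0)) powr \<mu>0"
      using mu0 \<open>0 < smax\<close> by (intro powr_mono2) auto
    also have "\<dots> = \<theta>" using mu0 th by (simp add: powr_powr)
    finally show "smax powr \<mu>0 \<le> \<epsilon>1\<^sup>2 / (2 * (8 * M + 8 + 1))" unfolding \<theta>_def .
  qed
  define Q where "Q p r \<delta> C \<longleftrightarrow> (\<forall>c g U. (c, g) \<in> K \<longrightarrow> dist (c, g) p < r \<longrightarrow> is_sol c U \<longrightarrow> U 0 = g \<longrightarrow>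
           (\<forall>x. -1 < x \<and> x < -1 + \<delta> \<longrightarrow>
              \<bar>U x - Lim (at_right (-1)) U\<bar> \<le> C * (1 + x) powr (min (sqrt (1 + cc1 c)) 1 - \<epsilon>)))"
    for p :: "param \<times> real" and r \<delta> C :: real
  have loc: "\<exists>t. fst t > 0 \<and> fst (snd t) > 0 \<and> snd (snd t) > 0 \<and> Q p (fst t) (fst (snd t)) (snd (snd t))"
    if p: "p \<in> K" for p
  proof -
    obtain c0 g0 where pcg: "p = (c0, g0)" by (cases p)
    have "\<exists>r>0. \<exists>\<delta>>0. \<exists>C>0. Q p r \<delta> C"
      unfolding Q_def pcg
      by (rule local_est[OF Ksub M e(1,2,3) mu mu0 smax]) (use p pcg in auto)
    then obtain r \<delta> C where "r > 0" "\<delta> > 0" "C > 0" "Q p r \<delta> C" by blast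
    thus ?thesis by (intro exI[of _ "(r, \<delta>, C)"]) auto
  qed
  then obtain T where T: "\<And>p. p \<in> K \<Longrightarrow> fst (T p) > 0 \<and> fst (snd (T p)) > 0 \<and> snd (snd (T p)) > 0
        \<and> Q p (fst (T p)) (fst (snd (T p))) (snd (snd (T p)))"
    by metis
  define rf where "rf p = fst (T p)" for p
  define df where "df p = fst (snd (T p))" for p
  define Cf where "Cf p = snd (snd (T p))" for p
  have Tp: "rf p > 0" "df p > 0" "Cf p > 0" "Q p (rf p) (df p) (Cf p)" if "p \<in> K" for p
    using T[OF that] unfolding rf_def df_def Cf_def by auto
  have cover: "K \<subseteq> (\<Union>p\<in>K. ball p (rf p))"
  proof
    fix q assume "q \<in> K"
    thus "q \<in> (\<Union>p\<in>K. ball p (rf p))" using Tp(1)[of q] by (intro UN_I[of q]) auto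
  qed
  obtain C' where C': "C' \<subseteq> K" "finite C'" "K \<subseteq> (\<Union>p\<in>C'. ball p (rf p))"
    using compactE_image[OF cK _ cover] by auto
  have C'ne: "C' \<noteq> {}" using C'(3) False by auto
  define \<delta> where "\<delta> = Min (df ` C')"
  define Cst where "Cst = Max (Cf ` C')"
  have \<delta>: "\<delta> > 0"
  proof -
    have "\<delta> \<in> df ` C'" unfolding \<delta>_def using C' C'ne by (intro Min_in) auto
    thus ?thesis using Tp(2) C'(1) by auto
  qed
  obtain p2 where p2: "p2 \<in> C'" using C'ne by blast
  have Cst: "Cst > 0"
  proof -
    have "Cf p2 \<le> Cst" unfolding Cst_def using C' p2 by (intro Max_ge) auto
    thus ?thesis using Tp(3)[of p2] p2 C'(1) by auto
  qed
  show ?thesis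
  proof (rule exI[of _ \<delta>], rule conjI[OF \<delta>], rule exI[of _ Cst], rule conjI[OF Cst], intro allI impI)
    fix c g U x
    assume cg: "(c, g) \<in> K" and solU: "is_sol c U" and Ug: "U 0 = g" and x: "-1 < x \<and> x < -1 + \<delta>"
    obtain p where p: "p \<in> C'" "(c, g) \<in> ball p (rf p)" using C'(3) cg by auto
    have pK: "p \<in> K" using p C' by auto
    have dp: "dist (c, g) p < rf p" using p(2) by (simp add: dist_commute)
    have "\<delta> \<le> df p" unfolding \<delta>_def using C' p by (intro Min_le) auto
    hence x': "-1 < x \<and> x < -1 + df p" using x by auto
    have b: "\<bar>U x - Lim (at_right (-1)) U\<bar> \<le> Cf p * (1 + x) powr (min (sqrt (1 + cc1 c)) 1 - \<epsilon>)"
      using Tp(4)[OF pK] cg dp solU Ug x' unfolding Q_def by blast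
    have "Cf p \<le> Cst" unfolding Cst_def using C' p by (intro Max_ge) auto
    hence "Cf p * (1 + x) powr (min (sqrt (1 + cc1 c)) 1 - \<epsilon>) \<le> Cst * (1 + x) powr (min (sqrt (1 + cc1 c)) 1 - \<epsilon>)"
      by (intro mult_right_mono) auto
    thus "\<bar>U x - Lim (at_right (-1)) U\<bar> \<le> Cst * (1 + x) powr (min (sqrt (1 + cc1 c)) 1 - \<epsilon>)"
      using b by linarith
  qed
qed

end
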